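(* Let $\alpha>-1$ and let $\phi(w)=aw+b$ with $a>0$ and $\mathrm{Re}(b)\ge 0$. Then $C_\phi$ is a normal operator on $\mathcal{A}^2_\alpha(\mathbb{C}_+)$ if and only if $a=1$ or $\mathrm{Re}(b)=0$.
   Context: $\mathbb{C}_+=\{z\in\mathbb{C}:\mathrm{Re}(z)>0\}$. For $\alpha>-1$, $\mathcal{A}^2_\alpha(\mathbb{C}_+)$ is the Hilbert space of analytic $f:\mathbb{C}_+\to\mathbb{C}$ with $\|f\|^2=\frac{1}{\pi}\int_{-\infty}^{\infty}\int_0^\infty |f(x+iy)|^2x^\alpha\,dx\,dy<\infty$. $C_\phi f=f\circ\phi$ is the (bounded) composition operator. *)

theory Defs
  imports "HOL-Analysis.Analysis"
begin

definition RHP :: "complex set" where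
  "RHP = {z. Re z > 0}"

text \<open>Two functions agreeing on C_+ represent
  the same element.\<close>
definition bergman_space :: "real \<Rightarrow> (complex \<Rightarrow> complex) set" where
  "bergman_space \<alpha> = {f. f holomorphic_on RHP \<and>
      set_integrable lborel RHP (\<lambda>z. (cmod (f z))\<^sup>2 * Re z powr \<alpha>)}"

definition bergman_inner :: "real \<Rightarrow> (complex \<Rightarrow> complex) \<Rightarrow> (complex \<Rightarrow> complex) \<Rightarrow> complex" where
  "bergman_inner \<alpha> f g =
     (1 / pi) * (LINT z:RHP|lborel. f z * cnj (g z) * complex_of_real (Re z powr \<alpha>))"

definition comp_op :: "(complex \<Rightarrow> complex) \<Rightarrow> (complex \<Rightarrow> complex) \<Rightarrow> (complex \<Rightarrow> complex)" where
  "comp_op \<phi> f = f \<circ> \<phi>"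

definition is_adjoint_on :: "real \<Rightarrow> ((complex \<Rightarrow> complex) \<Rightarrow> (complex \<Rightarrow> complex))
    \<Rightarrow> ((complex \<Rightarrow> complex) \<Rightarrow> (complex \<Rightarrow> complex)) \<Rightarrow> bool" where
  "is_adjoint_on \<alpha> T S \<longleftrightarrow>
     (\<forall>g\<in>bergman_space \<alpha>. S g \<in> bergman_space \<alpha>) \<and>
     (\<forall>f\<in>bergman_space \<alpha>. \<forall>g\<in>bergman_space \<alpha>.
        bergman_inner \<alpha> (T f) g = bergman_inner \<alpha> f (S g))"

definition normal_op_on :: "real \<Rightarrow> ((complex \<Rightarrow> complex) \<Rightarrow> (complex \<Rightarrow> complex)) \<Rightarrow> bool" where
  "normal_op_on \<alpha> T \<longleftrightarrow>
     (\<forall>f\<in>bergman_space \<alpha>. T f \<in> bergman_space \<alpha>) \<and>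
     (\<exists>S. is_adjoint_on \<alpha> T S \<and>
        (\<forall>f\<in>bergman_space \<alpha>. \<forall>z\<in>RHP. T (S f) z = S (T f) z))"

end

theory Submission
  imports Defs "HOL-Complex_Analysis.Complex_Analysis"
begin

lemma borel_measurable_Complex[measurable]:
  "f \<in> borel_measurable M \<Longrightarrow> g \<in> borel_measurable M \<Longrightarrow> (\<lambda>x. Complex (f x) (g x)) \<in> borel_measurable M"
  unfolding Complex_eq by (intro borel_measurable_add borel_measurable_times) (auto intro: measurable_compose[OF _ borel_measurable_of_real])

lemma lborel_complex: "distr (lborel \<Otimes>\<^sub>M lborel) borel (\<lambda>(x,y). Complex x y) = lborel"
proof (rule lborel_eqI[symmetric])
  fix l u :: complex assume le: "\<And>b. b \<in> Basis \<Longrightarrow> l \<bullet> b \<le> u \<bullet> b"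
  have [measurable]: "(\<lambda>(x,y). Complex x y) \<in> borel_measurable (lborel \<Otimes>\<^sub>M lborel)"
    by (simp add: Complex_eq case_prod_beta') 
  have "(\<lambda>(x,y). Complex x y) -` box l u \<inter> space (lborel \<Otimes>\<^sub>M lborel) = {Re l<..<Re u} \<times> {Im l<..<Im u}"
    by (auto simp: in_box_complex_iff space_pair_measure)
  moreover have "Re l \<le> Re u" "Im l \<le> Im u" using le[of 1] le[of \<i>] by (auto simp: Basis_complex_def)
  ultimately show "emeasure (distr (lborel \<Otimes>\<^sub>M lborel) borel (\<lambda>(x,y). Complex x y)) (box l u) = (\<Prod>b\<in>Basis. (u - l) \<bullet> b)"
    by (simp add: emeasure_distr lborel.emeasure_pair_measure_Times Basis_complex_def ennreal_mult')
qed simp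

lemma nn_integral_complex:
  assumes [measurable]: "F \<in> borel_measurable borel"
  shows "(\<integral>\<^sup>+z. F z \<partial>lborel) = (\<integral>\<^sup>+x. \<integral>\<^sup>+y. F (Complex x y) \<partial>lborel \<partial>lborel)"
proof -
  have "(\<integral>\<^sup>+z. F z \<partial>lborel) = (\<integral>\<^sup>+z. F z \<partial>distr (lborel \<Otimes>\<^sub>M lborel) borel (\<lambda>(x,y). Complex x y))"
    by (simp add: lborel_complex)
  also have "\<dots> = (\<integral>\<^sup>+p. F ((\<lambda>(x,y). Complex x y) p) \<partial>(lborel \<Otimes>\<^sub>M lborel))"
    by (rule nn_integral_distr) (auto simp: case_prod_beta')
  also have "\<dots> = (\<integral>\<^sup>+x. \<integral>\<^sup>+y. F (Complex x y) \<partial>lborel \<partial>lborel)"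
    by (subst lborel.nn_integral_fst[symmetric]) (auto simp: case_prod_beta')
  finally show ?thesis .
qed

lemma fubini_complex:
  fixes h :: "complex \<Rightarrow> complex"
  assumes int: "integrable lborel h"
  shows "AE x in lborel. integrable lborel (\<lambda>y. h (Complex x y))"
    and "integral\<^sup>L lborel h = (LINT x|lborel. LINT y|lborel. h (Complex x y))"
proof -
  have m[measurable]: "h \<in> borel_measurable borel" using int by auto
  have mC: "(\<lambda>p. Complex (fst p) (snd p)) \<in> measurable (lborel \<Otimes>\<^sub>M lborel) borel" by measurable
  have "integrable (distr (lborel \<Otimes>\<^sub>M lborel) borel (\<lambda>(x,y). Complex x y)) h"
    using int by (simp add: lborel_complex)
  then have i: "integrable (lborel \<Otimes>\<^sub>M lborel) (\<lambda>p. h (Complex (fst p) (snd p)))"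
    using integrable_distr_eq[OF mC m] by (simp add: case_prod_beta')
  show "AE x in lborel. integrable lborel (\<lambda>y. h (Complex x y))"
    using lborel_pair.AE_integrable_fst'[OF i] by simp
  have "integral\<^sup>L lborel h = integral\<^sup>L (distr (lborel \<Otimes>\<^sub>M lborel) borel (\<lambda>(x,y). Complex x y)) h"
    by (simp add: lborel_complex)
  also have "\<dots> = integral\<^sup>L (lborel \<Otimes>\<^sub>M lborel) (\<lambda>p. h (Complex (fst p) (snd p)))"
    using integral_distr[OF mC m] by (simp add: case_prod_beta')
  also have "\<dots> = (LINT x|lborel. LINT y|lborel. h (Complex x y))"
    using lborel_pair.integral_fst'[OF i] by simp
  finally show "integral\<^sup>L lborel h = (LINT x|lborel. LINT y|lborel. h (Complex x y))" .
qed

definition fz :: "(complex \<Rightarrow> complex) \<Rightarrow> complex \<Rightarrow> complex" where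
  "fz f z = (if z \<in> RHP then f z else 0)"

definition Lf :: "(complex \<Rightarrow> complex) \<Rightarrow> real \<Rightarrow> ennreal" where
  "Lf f x = (\<integral>\<^sup>+y. ennreal ((cmod (fz f (Complex x y)))\<^sup>2) \<partial>lborel)"

lemma RHP_open: "open RHP" unfolding RHP_def by (simp add: open_halfspace_Re_gt)

lemma RHP_sets[measurable]: "RHP \<in> sets borel" using RHP_open by simp

lemma fz_meas: assumes "f holomorphic_on RHP" shows "fz f \<in> borel_measurable borel"
  unfolding fz_def
  by (rule borel_measurable_continuous_on_if) (use assms holomorphic_on_imp_continuous_on in auto)

lemma Lf_meas: assumes "f holomorphic_on RHP" shows "Lf f \<in> borel_measurable borel"
proof -
  have [measurable]: "fz f \<in> borel_measurable borel" by (rule fz_meas[OF assms])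
  have "(\<lambda>(x,y). ennreal ((cmod (fz f (Complex x y)))\<^sup>2)) \<in> borel_measurable (lborel \<Otimes>\<^sub>M lborel)"
    by measurable
  from lborel.borel_measurable_nn_integral_fst[OF this] show ?thesis unfolding Lf_def by simp
qed

lemma Lf_nonpos: "x \<le> 0 \<Longrightarrow> Lf f x = 0" by (simp add: Lf_def fz_def RHP_def)

lemma Lf_pos: "x > 0 \<Longrightarrow> Lf f x = (\<integral>\<^sup>+y. ennreal ((cmod (f (Complex x y)))\<^sup>2) \<partial>lborel)"
  by (simp add: Lf_def fz_def RHP_def)

lemma space_iff:
  assumes "f holomorphic_on RHP"
  shows "f \<in> bergman_space \<alpha> \<longleftrightarrow> (\<integral>\<^sup>+x. ennreal (x powr \<alpha>) * Lf f x \<partial>lborel) < \<infinity>"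
proof -
  have [measurable]: "fz f \<in> borel_measurable borel" by (rule fz_meas[OF assms])
  have eq: "(\<lambda>z. indicator RHP z *\<^sub>R ((cmod (f z))\<^sup>2 * Re z powr \<alpha>)) = (\<lambda>z. (cmod (fz f z))\<^sup>2 * Re z powr \<alpha>)"
    by (auto simp: fun_eq_iff fz_def indicator_def)
  have "set_integrable lborel RHP (\<lambda>z. (cmod (f z))\<^sup>2 * Re z powr \<alpha>) \<longleftrightarrow>
      integrable lborel (\<lambda>z. (cmod (fz f z))\<^sup>2 * Re z powr \<alpha>)"
    unfolding set_integrable_def eq ..
  also have "\<dots> \<longleftrightarrow> (\<integral>\<^sup>+z. ennreal ((cmod (fz f z))\<^sup>2 * Re z powr \<alpha>) \<partial>lborel) < \<infinity>"
    by (subst integrable_iff_bounded) auto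
  also have "(\<integral>\<^sup>+z. ennreal ((cmod (fz f z))\<^sup>2 * Re z powr \<alpha>) \<partial>lborel) = (\<integral>\<^sup>+x. ennreal (x powr \<alpha>) * Lf f x \<partial>lborel)"
  proof -
    have "(\<integral>\<^sup>+z. ennreal ((cmod (fz f z))\<^sup>2 * Re z powr \<alpha>) \<partial>lborel) =
        (\<integral>\<^sup>+x. \<integral>\<^sup>+y. ennreal ((cmod (fz f (Complex x y)))\<^sup>2 * x powr \<alpha>) \<partial>lborel \<partial>lborel)"
      by (subst nn_integral_complex) auto
    also have "\<dots> = (\<integral>\<^sup>+x. ennreal (x powr \<alpha>) * Lf f x \<partial>lborel)"
      unfolding Lf_def
      by (intro nn_integral_cong, subst nn_integral_cmult[symmetric]) (auto simp: ennreal_mult' mult.commute)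
    finally show ?thesis .
  qed
  finally show ?thesis using assms unfolding bergman_space_def by auto
qed

lemma has_contour_integral_linepath_same_Im:
  assumes "Im z = c" "Im z' = c" "Re z = a" "Re z' = b" "a < b"
    and "(\<lambda>x. H (Complex x c)) integrable_on {a..b}"
  shows "(H has_contour_integral integral {a..b} (\<lambda>x. H (Complex x c))) (linepath z z')"
proof -
  let ?F = "\<lambda>x. H (Complex x c)"
  have "(?F has_integral integral {a..b} ?F) {a..b}" using assms(6) by (simp add: has_integral_integral)
  then have "((\<lambda>t. ?F ((b - a) *\<^sub>R t + a)) has_integral (integral {a..b} ?F /\<^sub>R (b - a) ^ DIM(real)))
      (cbox ((a - a) /\<^sub>R (b - a)) ((b - a) /\<^sub>R (b - a)))"
    by (intro has_integral_affinity') (use assms in auto)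
  then have "((\<lambda>t. ?F ((b - a) * t + a)) has_integral (1 / (b - a)) *\<^sub>R integral {a..b} ?F) {0..1}"
    using assms(5) by (simp add: divide_inverse_commute)
  then have "((\<lambda>t. ?F ((b - a) * t + a) * complex_of_real (b - a)) has_integral
       ((1 / (b - a)) *\<^sub>R integral {a..b} ?F) * complex_of_real (b - a)) {0..1}"
    by (rule has_integral_mult_left)
  moreover have "((1 / (b - a)) *\<^sub>R integral {a..b} ?F) * complex_of_real (b - a) = integral {a..b} ?F"
    using assms(5) by (simp add: scaleR_conv_of_real)
  moreover have "linepath z z' t = Complex ((b - a) * t + a) c" for t
    using assms by (simp add: linepath_def complex_eq_iff algebra_simps)
  moreover have "z' - z = complex_of_real (b - a)"
    using assms by (simp add: complex_eq_iff)
  ultimately show ?thesis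
    by (simp add: has_contour_integral_linepath)
qed

lemma rect_identity:
  fixes H :: "complex \<Rightarrow> complex"
  assumes holH: "H holomorphic_on cbox (Complex p1 (-Y)) (Complex p2 Y)"
    and p: "p1 < p2" and Y: "0 < Y"
  shows "\<i> * (integral {-Y..Y} (\<lambda>y. H (Complex p2 y)) - integral {-Y..Y} (\<lambda>y. H (Complex p1 y)))
       = integral {p1..p2} (\<lambda>x. H (Complex x Y)) - integral {p1..p2} (\<lambda>x. H (Complex x (-Y)))"
proof -
  define a1 where "a1 = Complex p1 (-Y)"
  define a2 where "a2 = Complex p2 (-Y)"
  define a3 where "a3 = Complex p2 Y"
  define a4 where "a4 = Complex p1 Y"
  let ?S = "cbox a1 a3"
  have cont: "continuous_on ?S H" using holH holomorphic_on_imp_continuous_on a1_def a3_def by blast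
  have inS: "Complex x y \<in> ?S" if "p1 \<le> x" "x \<le> p2" "-Y \<le> y" "y \<le> Y" for x y
    using that by (auto simp: a1_def a3_def in_cbox_complex_iff)
  have contV: "continuous_on {-Y..Y} (\<lambda>y. H (Complex x y))" if "p1 \<le> x" "x \<le> p2" for x
    by (rule continuous_on_compose2[OF cont]) (auto intro!: continuous_intros simp: inS that)
  have contH: "continuous_on {p1..p2} (\<lambda>x. H (Complex x y))" if "-Y \<le> y" "y \<le> Y" for y
    by (rule continuous_on_compose2[OF cont]) (auto intro!: continuous_intros simp: inS that)
  define V1 where "V1 = integral {-Y..Y} (\<lambda>y. H (Complex p1 y))"
  define V2 where "V2 = integral {-Y..Y} (\<lambda>y. H (Complex p2 y))"
  define B1 where "B1 = integral {p1..p2} (\<lambda>x. H (Complex x (-Y)))"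
  define B2 where "B2 = integral {p1..p2} (\<lambda>x. H (Complex x Y))"
  have i1: "(H has_contour_integral B1) (linepath a1 a2)"
    unfolding B1_def a1_def a2_def
    by (rule has_contour_integral_linepath_same_Im) (use p Y contH[of "-Y"] in \<open>auto intro: integrable_continuous_interval\<close>)
  have i3': "(H has_contour_integral B2) (linepath a4 a3)"
    unfolding B2_def a4_def a3_def
    by (rule has_contour_integral_linepath_same_Im) (use p Y contH[of "Y"] in \<open>auto intro: integrable_continuous_interval\<close>)
  have i3: "(H has_contour_integral (-B2)) (linepath a3 a4)"
    using has_contour_integral_reverse_linepath[OF i3'] .
  have i2: "(H has_contour_integral (\<i> * V2)) (linepath a2 a3)"
  proof -
    have "((\<lambda>x. H (Complex p2 x)) has_integral (-\<i> * (\<i> * V2))) {-Y..Y}"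
      using contV[of p2] p unfolding V2_def by (simp add: integrable_continuous_interval integrable_integral)
    then show ?thesis
      by (subst has_contour_integral_linepath_same_Re_iff[where c=p2 and a="-Y" and b=Y]) (use Y in \<open>auto simp: a2_def a3_def\<close>)
  qed
  have i4: "(H has_contour_integral (-(\<i> * V1))) (linepath a4 a1)"
  proof -
    have "((\<lambda>x. H (Complex p1 x)) has_integral (-\<i> * (\<i> * V1))) {-Y..Y}"
      using contV[of p1] p unfolding V1_def by (simp add: integrable_continuous_interval integrable_integral)
    then have "(H has_contour_integral (\<i> * V1)) (linepath a1 a4)"
      by (subst has_contour_integral_linepath_same_Re_iff[where c=p1 and a="-Y" and b=Y]) (use Y in \<open>auto simp: a1_def a4_def\<close>)
    then show ?thesis using has_contour_integral_reverse_linepath by blast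
  qed
  have j34: "(H has_contour_integral (-B2 + -(\<i> * V1))) (linepath a3 a4 +++ linepath a4 a1)"
    by (rule has_contour_integral_join[OF i3 i4]) auto
  have j234: "(H has_contour_integral (\<i> * V2 + (-B2 + -(\<i> * V1)))) (linepath a2 a3 +++ linepath a3 a4 +++ linepath a4 a1)"
    by (rule has_contour_integral_join[OF i2 j34]) auto
  have j: "(H has_contour_integral (B1 + (\<i> * V2 + (-B2 + -(\<i> * V1))))) (linepath a1 a2 +++ linepath a2 a3 +++ linepath a3 a4 +++ linepath a4 a1)"
    by (rule has_contour_integral_join[OF i1 j234]) auto
  have "rectpath a1 a3 = linepath a1 a2 +++ linepath a2 a3 +++ linepath a3 a4 +++ linepath a4 a1"
    by (simp add: rectpath_def Let_def a1_def a2_def a3_def a4_def)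
  with j have "(H has_contour_integral (B1 + (\<i> * V2 + (-B2 + -(\<i> * V1))))) (rectpath a1 a3)" by simp
  moreover have "(H has_contour_integral 0) (rectpath a1 a3)"
    by (rule Cauchy_theorem_convex_simple[OF holH[folded a1_def a3_def]])
       (use p Y path_image_rectpath_subset_cbox[of a1 a3] in \<open>auto simp: a1_def a3_def\<close>)
  ultimately have "B1 + (\<i> * V2 + (-B2 + -(\<i> * V1))) = 0"
    using has_contour_integral_unique by blast
  then show ?thesis unfolding V1_def[symmetric] V2_def[symmetric] B1_def[symmetric] B2_def[symmetric]
    by (simp add: algebra_simps)
qed

lemma tendsto_Icc_integral:
  fixes \<phi> :: "real \<Rightarrow> complex"
  assumes int: "integrable lborel \<phi>"
  shows "((\<lambda>Y. integral {-Y..Y} \<phi>) \<longlongrightarrow> integral\<^sup>L lborel \<phi>) at_top"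
proof -
  have eq: "integral {-Y..Y} \<phi> = integral\<^sup>L lborel (\<lambda>y. indicator {-Y..Y} y *\<^sub>R \<phi> y)" for Y
  proof -
    have si: "set_integrable lborel {-Y..Y} \<phi>"
      unfolding set_integrable_def by (rule integrable_mult_indicator) (use int in auto)
    show ?thesis using set_borel_integral_eq_integral(2)[OF si] by (simp add: set_lebesgue_integral_def)
  qed
  have "((\<lambda>Y. integral\<^sup>L lborel (\<lambda>y. indicator {-Y..Y} y *\<^sub>R \<phi> y)) \<longlongrightarrow> integral\<^sup>L lborel \<phi>) at_top"
  proof (rule integral_dominated_convergence_at_top[where w="\<lambda>y. norm (\<phi> y)"])
    show "\<phi> \<in> borel_measurable lborel" using int by auto
    show "(\<lambda>y. indicator {-Y..Y} y *\<^sub>R \<phi> y) \<in> borel_measurable lborel" for Y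
      using int by (auto intro!: borel_measurable_integrable integrable_mult_indicator)
    show "integrable lborel (\<lambda>y. norm (\<phi> y))" using int by auto
    show "AE y in lborel. ((\<lambda>Y. indicator {-Y..Y} y *\<^sub>R \<phi> y) \<longlongrightarrow> \<phi> y) at_top"
    proof (rule AE_I2)
      fix y
      have "eventually (\<lambda>Y. indicator {-Y..Y} y *\<^sub>R \<phi> y = \<phi> y) at_top"
        using eventually_ge_at_top[of "\<bar>y\<bar>"] by eventually_elim (auto simp: indicator_def)
      then show "((\<lambda>Y. indicator {-Y..Y} y *\<^sub>R \<phi> y) \<longlongrightarrow> \<phi> y) at_top"
        by (rule tendsto_eventually)
    qed
    show "\<forall>\<^sub>F Y in at_top. AE y in lborel. norm (indicator {-Y..Y} y *\<^sub>R \<phi> y) \<le> norm (\<phi> y)"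
      by (auto simp: indicator_def)
  qed
  then show ?thesis unfolding eq .
qed

lemma meas_strip:
  fixes H :: "complex \<Rightarrow> complex"
  assumes "continuous_on S H" "S \<in> sets borel"
  shows "(\<lambda>(y,x). ennreal (indicator S (Complex x y) * cmod (H (Complex x y)))) \<in> borel_measurable (lborel \<Otimes>\<^sub>M lborel)"
proof -
  have "(\<lambda>z. indicator S z *\<^sub>R norm (H z)) \<in> borel_measurable borel"
    by (rule borel_measurable_continuous_on_indicator) (use assms in \<open>auto intro: continuous_on_norm\<close>)
  then have m: "(\<lambda>z. indicator S z * norm (H z)) \<in> borel_measurable borel" by simp
  have c: "(\<lambda>p. Complex (snd p) (fst p)) \<in> borel_measurable (lborel \<Otimes>\<^sub>M lborel)"
    by (simp add: Complex_eq)
  have "(\<lambda>p. (\<lambda>z. indicator S z * norm (H z)) (Complex (snd p) (fst p))) \<in> borel_measurable (lborel \<Otimes>\<^sub>M lborel)"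
    using measurable_compose[OF c m] by (simp add: comp_def)
  then show ?thesis by (simp add: case_prod_beta')
qed

lemma strip_core:
  fixes H :: "complex \<Rightarrow> complex"
  assumes holH: "H holomorphic_on {z. p1 \<le> Re z \<and> Re z \<le> p2}" and p: "p1 < p2"
    and int1: "integrable lborel (\<lambda>y. H (Complex p1 y))"
    and int2: "integrable lborel (\<lambda>y. H (Complex p2 y))"
    and fin: "(\<integral>\<^sup>+y. \<integral>\<^sup>+x. ennreal (indicator {p1..p2} x * cmod (H (Complex x y))) \<partial>lborel \<partial>lborel) < \<infinity>"
  shows "(LINT y|lborel. H (Complex p1 y)) = (LINT y|lborel. H (Complex p2 y))"
proof (rule ccontr)
  assume ne: "(LINT y|lborel. H (Complex p1 y)) \<noteq> (LINT y|lborel. H (Complex p2 y))"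
  define S where "S = {z. p1 \<le> Re z \<and> Re z \<le> p2}"
  have contH: "continuous_on S H" using holH holomorphic_on_imp_continuous_on S_def by blast
  have Sb: "S \<in> sets borel"
  proof -
    have "closed S" unfolding S_def
      using closed_Int[OF closed_halfspace_Re_ge[of p1] closed_halfspace_Re_le[of p2]]
      by (simp add: Collect_conj_eq)
    then show ?thesis by simp
  qed
  define h where "h y = (\<integral>\<^sup>+x. ennreal (indicator {p1..p2} x * cmod (H (Complex x y))) \<partial>lborel)" for y
  have ind: "indicator {p1..p2} x = (indicator S (Complex x y) :: real)" for x y
    by (simp add: S_def indicator_def)
  have hmeas: "h \<in> borel_measurable borel"
  proof -
    have "(\<lambda>y. \<integral>\<^sup>+x. (\<lambda>(y,x). ennreal (indicator S (Complex x y) * cmod (H (Complex x y)))) (y, x) \<partial>lborel) \<in> borel_measurable lborel"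
      by (rule lborel.borel_measurable_nn_integral_fst[OF meas_strip[OF contH Sb]])
    then show ?thesis unfolding h_def by (simp add: ind[symmetric])
  qed
  define V where "V k Y = integral {-Y..Y} (\<lambda>y. H (Complex k y))" for k Y
  define B where "B t = integral {p1..p2} (\<lambda>x. H (Complex x t))" for t
  have Bb: "ennreal (cmod (B t)) \<le> h t" for t
  proof -
    have c: "continuous_on {p1..p2} (\<lambda>x. H (Complex x t))"
      by (rule continuous_on_compose2[OF contH]) (auto intro!: continuous_intros simp: S_def)
    have si: "set_integrable lborel {p1..p2} (\<lambda>x. H (Complex x t))"
      unfolding set_integrable_def by (rule borel_integrable_compact) (use c in auto)
    have "B t = (LINT x:{p1..p2}|lborel. H (Complex x t))"
      using set_borel_integral_eq_integral(2)[OF si] by (simp add: B_def)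
    then have "ennreal (cmod (B t)) \<le> (\<integral>\<^sup>+x. norm (indicator {p1..p2} x *\<^sub>R H (Complex x t)) \<partial>lborel)"
      using integral_norm_bound_ennreal[OF si[unfolded set_integrable_def]]
      unfolding set_lebesgue_integral_def by simp
    also have "\<dots> = h t" unfolding h_def by (intro nn_integral_cong) (auto simp: indicator_def)
    finally show ?thesis .
  qed
  have bound: "ennreal (cmod (V p2 Y - V p1 Y)) \<le> h Y + h (-Y)" if Y: "Y > 0" for Y
  proof -
    have holR: "H holomorphic_on cbox (Complex p1 (-Y)) (Complex p2 Y)"
      by (rule holomorphic_on_subset[OF holH]) (auto simp: in_cbox_complex_iff)
    have "cmod (V p2 Y - V p1 Y) = cmod (\<i> * (V p2 Y - V p1 Y))" by (simp add: norm_mult)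
    also have "\<dots> = cmod (B Y - B (-Y))" using rect_identity[OF holR p Y] by (simp add: V_def B_def)
    also have "\<dots> \<le> cmod (B Y) + cmod (B (-Y))" by (rule norm_triangle_ineq4)
    finally have "ennreal (cmod (V p2 Y - V p1 Y)) \<le> ennreal (cmod (B Y)) + ennreal (cmod (B (-Y)))"
      by (simp add: ennreal_plus[symmetric] del: ennreal_plus)
    also have "\<dots> \<le> h Y + h (-Y)" by (intro add_mono Bb)
    finally show ?thesis .
  qed
  define D where "D = (LINT y|lborel. H (Complex p2 y)) - (LINT y|lborel. H (Complex p1 y))"
  have Dpos: "cmod D > 0" using ne by (simp add: D_def)
  have "((\<lambda>Y. V p2 Y - V p1 Y) \<longlongrightarrow> D) at_top"
    unfolding D_def V_def by (intro tendsto_diff tendsto_Icc_integral int1 int2)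
  then have "eventually (\<lambda>Y. dist (V p2 Y - V p1 Y) D < cmod D / 2) at_top"
    using Dpos unfolding tendsto_iff by (metis half_gt_zero)
  moreover have "eventually (\<lambda>Y. Y > (0::real)) at_top" by (rule eventually_gt_at_top)
  ultimately have "eventually (\<lambda>Y. ennreal (cmod D / 2) \<le> h Y + h (-Y)) at_top"
  proof eventually_elim
    case (elim Y)
    have "cmod D \<le> cmod (V p2 Y - V p1 Y) + dist (V p2 Y - V p1 Y) D"
      by (metis dist_norm norm_minus_commute norm_triangle_sub)
    then have "cmod D / 2 \<le> cmod (V p2 Y - V p1 Y)" using elim by simp
    then have "ennreal (cmod D / 2) \<le> ennreal (cmod (V p2 Y - V p1 Y))" by (rule ennreal_leI)
    also have "\<dots> \<le> h Y + h (-Y)" using bound elim by simp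
    finally show ?case .
  qed
  then obtain Y0 where Y0: "\<And>Y. Y \<ge> Y0 \<Longrightarrow> ennreal (cmod D / 2) \<le> h Y + h (-Y)"
    by (auto simp: eventually_at_top_linorder)
  have hneg: "(\<integral>\<^sup>+y. h (-y) \<partial>lborel) = (\<integral>\<^sup>+y. h y \<partial>lborel)"
    using nn_integral_real_affine[OF hmeas, of "-1" 0] by simp
  have hfin: "(\<integral>\<^sup>+y. h y \<partial>lborel) < \<infinity>" using fin unfolding h_def .
  define T where "T = (\<integral>\<^sup>+y. (h y + h (-y)) \<partial>lborel)"
  have "T = (\<integral>\<^sup>+y. h y \<partial>lborel) + (\<integral>\<^sup>+y. h (-y) \<partial>lborel)"
    unfolding T_def by (rule nn_integral_add) (use hmeas in auto)
  then have Tfin: "T < \<infinity>" using hfin hneg by simp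
  have le: "ennreal (cmod D / 2) * ennreal (real n) \<le> T" for n :: nat
  proof -
    have "ennreal (cmod D / 2) * ennreal (real n) = (\<integral>\<^sup>+y. ennreal (cmod D / 2) * indicator {Y0..Y0 + real n} y \<partial>lborel)"
      by (simp add: nn_integral_cmult_indicator)
    also have "\<dots> \<le> T" unfolding T_def
      by (intro nn_integral_mono) (auto simp: indicator_def intro: Y0)
    finally show ?thesis .
  qed
  obtain t where t: "T = ennreal t" "t \<ge> 0" using Tfin by (cases T) auto
  obtain n :: nat where n: "real n > t / (cmod D / 2)" using reals_Archimedean2 by blast
  have "cmod D / 2 * real n > t" using n Dpos by (simp add: field_simps)
  moreover have "cmod D / 2 * real n \<le> t"
    using le[of n] t Dpos by (simp add: ennreal_mult[symmetric])
  ultimately show False by simp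
qed

lemma borel_measurable_cnj'[measurable]:
  "f \<in> borel_measurable M \<Longrightarrow> (\<lambda>x. cnj (f x)) \<in> borel_measurable M"
  using measurable_compose[OF _ borel_measurable_continuous_onI[of cnj]] by (auto intro: continuous_intros)

lemma space_holo: "f \<in> bergman_space \<alpha> \<Longrightarrow> f holomorphic_on RHP"
  by (simp add: bergman_space_def)

lemma space_fin: "f \<in> bergman_space \<alpha> \<Longrightarrow> (\<integral>\<^sup>+x. ennreal (x powr \<alpha>) * Lf f x \<partial>lborel) < \<infinity>"
  using space_iff space_holo by blast

lemma Lf_fin_interval:
  assumes f: "f \<in> bergman_space \<alpha>" and a: "0 < a"
  shows "(\<integral>\<^sup>+x. indicator {a..b} x * Lf f x \<partial>lborel) < \<infinity>"
proof -
  define m where "m = (if \<alpha> \<ge> 0 then a powr \<alpha> else b powr \<alpha>)"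
  show ?thesis
  proof (cases "a \<le> b")
    case False
    then show ?thesis by simp
  next
    case True
    have mpos: "m > 0" using a True by (simp add: m_def)
    have mle: "m \<le> x powr \<alpha>" if "a \<le> x" "x \<le> b" for x
      using that a by (auto simp: m_def intro: powr_mono2 powr_mono2')
    have "(\<integral>\<^sup>+x. indicator {a..b} x * Lf f x \<partial>lborel) \<le> (\<integral>\<^sup>+x. ennreal (1/m) * (ennreal (x powr \<alpha>) * Lf f x) \<partial>lborel)"
    proof (intro nn_integral_mono)
      fix x
      show "indicator {a..b} x * Lf f x \<le> ennreal (1/m) * (ennreal (x powr \<alpha>) * Lf f x)"
      proof (cases "x \<in> {a..b}")
        case True
        have "1 \<le> (1/m) * x powr \<alpha>" using mle[of x] True mpos by (simp add: field_simps)
        then have A: "ennreal 1 \<le> ennreal ((1/m) * x powr \<alpha>)" by (rule ennreal_leI)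
        have B: "ennreal ((1/m) * x powr \<alpha>) = ennreal (1/m) * ennreal (x powr \<alpha>)"
          using mpos by (subst ennreal_mult[symmetric]) auto
        have "(1::ennreal) \<le> ennreal (1/m) * ennreal (x powr \<alpha>)" by (metis A B ennreal_1)
        then have "1 * Lf f x \<le> ennreal (1/m) * ennreal (x powr \<alpha>) * Lf f x"
          by (intro mult_right_mono) auto
        then show ?thesis using True by (simp add: mult.assoc)
      qed simp
    qed
    also have "\<dots> = ennreal (1/m) * (\<integral>\<^sup>+x. ennreal (x powr \<alpha>) * Lf f x \<partial>lborel)"
      using Lf_meas[OF space_holo[OF f]] by (intro nn_integral_cmult) auto
    also have "\<dots> < \<infinity>" using space_fin[OF f] by (simp add: ennreal_mult_less_top)
    finally show ?thesis .
  qed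
qed

lemma Lf_AE_fin:
  assumes f: "f \<in> bergman_space \<alpha>"
  shows "AE x in lborel. x > 0 \<longrightarrow> Lf f x < \<infinity>"
proof -
  have "AE x in lborel. ennreal (x powr \<alpha>) * Lf f x \<noteq> \<infinity>"
    by (rule nn_integral_PInf_AE) (use Lf_meas[OF space_holo[OF f]] space_fin[OF f] in auto)
  then show ?thesis
    by eventually_elim (auto simp: ennreal_mult_eq_top_iff top.not_eq_extremum)
qed

lemma ab_le: "2 * (cmod a * cmod b) \<le> (cmod a)\<^sup>2 + (cmod b)\<^sup>2"
  using sum_squares_bound[of "cmod a" "cmod b"] by (simp add: algebra_simps power2_eq_square)

lemma line_integrable:
  assumes hf: "f holomorphic_on RHP" and hg: "g holomorphic_on RHP"
    and p: "p > 0" and q: "q > 0" and fp: "Lf f p < \<infinity>" and gq: "Lf g q < \<infinity>"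
  shows "integrable lborel (\<lambda>y. f (Complex p y) * cnj (g (Complex q y)))"
    and "2 * ennreal (cmod (LINT y|lborel. f (Complex p y) * cnj (g (Complex q y)))) \<le> Lf f p + Lf g q"
proof -
  have [measurable]: "fz f \<in> borel_measurable borel" "fz g \<in> borel_measurable borel"
    using fz_meas hf hg by auto
  have eq: "f (Complex p y) * cnj (g (Complex q y)) = fz f (Complex p y) * cnj (fz g (Complex q y))" for y
    using p q by (simp add: fz_def RHP_def)
  have meas[measurable]: "(\<lambda>y. fz f (Complex p y) * cnj (fz g (Complex q y))) \<in> borel_measurable borel"
    by measurable
  have le: "(\<integral>\<^sup>+y. 2 * ennreal (norm (f (Complex p y) * cnj (g (Complex q y)))) \<partial>lborel) \<le> Lf f p + Lf g q"
  proof -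
    have "(\<integral>\<^sup>+y. 2 * ennreal (norm (f (Complex p y) * cnj (g (Complex q y)))) \<partial>lborel)
        \<le> (\<integral>\<^sup>+y. ennreal ((cmod (fz f (Complex p y)))\<^sup>2) + ennreal ((cmod (fz g (Complex q y)))\<^sup>2) \<partial>lborel)"
    proof (intro nn_integral_mono)
      fix y
      have "2 * (cmod (fz f (Complex p y)) * cmod (fz g (Complex q y))) \<le> (cmod (fz f (Complex p y)))\<^sup>2 + (cmod (fz g (Complex q y)))\<^sup>2"
        by (rule ab_le)
      then have "ennreal (2 * (cmod (fz f (Complex p y)) * cmod (fz g (Complex q y)))) \<le> ennreal ((cmod (fz f (Complex p y)))\<^sup>2 + (cmod (fz g (Complex q y)))\<^sup>2)"
        by (rule ennreal_leI)
      then show "2 * ennreal (norm (f (Complex p y) * cnj (g (Complex q y)))) \<le> ennreal ((cmod (fz f (Complex p y)))\<^sup>2) + ennreal ((cmod (fz g (Complex q y)))\<^sup>2)"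
        unfolding eq by (simp add: norm_mult ennreal_mult ennreal_plus[symmetric] del: ennreal_plus)
    qed
    also have "\<dots> = Lf f p + Lf g q" unfolding Lf_def by (rule nn_integral_add) auto
    finally show ?thesis .
  qed
  have fin: "(\<integral>\<^sup>+y. ennreal (norm (f (Complex p y) * cnj (g (Complex q y)))) \<partial>lborel) < \<infinity>"
  proof -
    have "2 * (\<integral>\<^sup>+y. ennreal (norm (f (Complex p y) * cnj (g (Complex q y)))) \<partial>lborel) \<le> Lf f p + Lf g q"
      using le by (subst nn_integral_cmult[symmetric]) (auto simp: eq)
    also have "\<dots> < \<infinity>" using fp gq by simp
    finally show ?thesis by (auto simp: ennreal_mult_less_top top.not_eq_extremum)
  qed
  show int: "integrable lborel (\<lambda>y. f (Complex p y) * cnj (g (Complex q y)))"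
    using fin by (subst integrable_iff_bounded) (auto simp: eq)
  have "2 * ennreal (cmod (LINT y|lborel. f (Complex p y) * cnj (g (Complex q y))))
     \<le> 2 * (\<integral>\<^sup>+y. ennreal (norm (f (Complex p y) * cnj (g (Complex q y)))) \<partial>lborel)"
    by (intro mult_left_mono integral_norm_bound_ennreal int) auto
  also have "\<dots> = (\<integral>\<^sup>+y. 2 * ennreal (norm (f (Complex p y) * cnj (g (Complex q y)))) \<partial>lborel)"
    by (subst nn_integral_cmult) (auto simp: eq)
  also have "\<dots> \<le> Lf f p + Lf g q" by (rule le)
  finally show "2 * ennreal (cmod (LINT y|lborel. f (Complex p y) * cnj (g (Complex q y)))) \<le> Lf f p + Lf g q" .
qed

lemma cnj_RHP: "cnj ` RHP = RHP"
proof -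
  have "z \<in> cnj ` RHP" if "z \<in> RHP" for z
    using that by (intro image_eqI[of z cnj "cnj z"]) (auto simp: RHP_def)
  then show ?thesis by (auto simp: RHP_def)
qed

lemma line_symm:
  assumes f: "f \<in> bergman_space \<alpha>" and g: "g \<in> bergman_space \<alpha>"
    and p: "0 < p1" "p1 < p2" "p2 < \<sigma>"
    and fin: "Lf f p1 < \<infinity>" "Lf f p2 < \<infinity>" "Lf g (\<sigma> - p1) < \<infinity>" "Lf g (\<sigma> - p2) < \<infinity>"
  shows "(LINT y|lborel. f (Complex p1 y) * cnj (g (Complex (\<sigma> - p1) y))) =
         (LINT y|lborel. f (Complex p2 y) * cnj (g (Complex (\<sigma> - p2) y)))"
proof -
  have hf: "f holomorphic_on RHP" and hg: "g holomorphic_on RHP" using f g space_holo by auto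
  have [measurable]: "fz f \<in> borel_measurable borel" "fz g \<in> borel_measurable borel"
    using fz_meas hf hg by auto
  define G where "G = cnj \<circ> g \<circ> cnj"
  have hG: "G holomorphic_on RHP" unfolding G_def
    by (rule holomorphic_on_compose_cnj_cnj) (use hg RHP_open cnj_RHP in auto)
  define H where "H = (\<lambda>\<zeta>. f \<zeta> * G (of_real \<sigma> - \<zeta>))"
  have cc: "cnj (of_real \<sigma> - Complex x y) = Complex (\<sigma> - x) y"
     "of_real \<sigma> - cnj (Complex x y) = Complex (\<sigma> - x) y" for x y
    by (simp_all add: complex_eq_iff)
  have HC: "H (Complex x y) = f (Complex x y) * cnj (g (Complex (\<sigma> - x) y))" for x y
    by (simp add: H_def G_def cc)
  have holH: "H holomorphic_on {z. p1 \<le> Re z \<and> Re z \<le> p2}"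
  proof -
    let ?S = "{z. p1 \<le> Re z \<and> Re z \<le> p2}"
    have "f holomorphic_on ?S" by (rule holomorphic_on_subset[OF hf]) (use p in \<open>auto simp: RHP_def\<close>)
    moreover have "(\<lambda>\<zeta>. G (of_real \<sigma> - \<zeta>)) holomorphic_on ?S"
    proof -
      have "(G \<circ> (\<lambda>\<zeta>. of_real \<sigma> - \<zeta>)) holomorphic_on ?S"
        by (rule holomorphic_on_compose_gen[OF _ hG]) (use p in \<open>auto simp: RHP_def intro!: holomorphic_intros\<close>)
      then show ?thesis by (simp add: comp_def)
    qed
    ultimately show ?thesis unfolding H_def by (rule holomorphic_on_mult)
  qed
  have int1: "integrable lborel (\<lambda>y. H (Complex p1 y))"
    unfolding HC using line_integrable(1)[OF hf hg _ _ fin(1) fin(3)] p by auto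
  have int2: "integrable lborel (\<lambda>y. H (Complex p2 y))"
    unfolding HC using line_integrable(1)[OF hf hg _ _ fin(2) fin(4)] p by auto
  have finS: "(\<integral>\<^sup>+y. \<integral>\<^sup>+x. ennreal (indicator {p1..p2} x * cmod (H (Complex x y))) \<partial>lborel \<partial>lborel) < \<infinity>"
  proof -
    have "(\<integral>\<^sup>+y. \<integral>\<^sup>+x. ennreal (indicator {p1..p2} x * cmod (H (Complex x y))) \<partial>lborel \<partial>lborel) \<le>
       (\<integral>\<^sup>+y. \<integral>\<^sup>+x. indicator {p1..p2} x * ennreal ((cmod (fz f (Complex x y)))\<^sup>2) +
           indicator {p1..p2} x * ennreal ((cmod (fz g (Complex (\<sigma> - x) y)))\<^sup>2) \<partial>lborel \<partial>lborel)"
    proof (intro nn_integral_mono)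
      fix x y :: real
      show "ennreal (indicator {p1..p2} x * cmod (H (Complex x y))) \<le>
           indicator {p1..p2} x * ennreal ((cmod (fz f (Complex x y)))\<^sup>2) +
           indicator {p1..p2} x * ennreal ((cmod (fz g (Complex (\<sigma> - x) y)))\<^sup>2)"
      proof (cases "x \<in> {p1..p2}")
        case True
        then have e1: "fz f (Complex x y) = f (Complex x y)" and e2: "fz g (Complex (\<sigma> - x) y) = g (Complex (\<sigma> - x) y)"
          using p by (auto simp: fz_def RHP_def)
        have "cmod (H (Complex x y)) \<le> 2 * (cmod (f (Complex x y)) * cmod (g (Complex (\<sigma> - x) y)))"
          by (simp add: HC norm_mult)
        also have "\<dots> \<le> (cmod (f (Complex x y)))\<^sup>2 + (cmod (g (Complex (\<sigma> - x) y)))\<^sup>2" by (rule ab_le)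
        finally have "ennreal (cmod (H (Complex x y))) \<le> ennreal ((cmod (f (Complex x y)))\<^sup>2 + (cmod (g (Complex (\<sigma> - x) y)))\<^sup>2)"
          by (rule ennreal_leI)
        then show ?thesis using True by (simp add: e1 e2 ennreal_plus[symmetric] del: ennreal_plus)
      qed simp
    qed
    also have "\<dots> = (\<integral>\<^sup>+x. \<integral>\<^sup>+y. indicator {p1..p2} x * ennreal ((cmod (fz f (Complex x y)))\<^sup>2) +
           indicator {p1..p2} x * ennreal ((cmod (fz g (Complex (\<sigma> - x) y)))\<^sup>2) \<partial>lborel \<partial>lborel)"
      by (rule lborel_pair.Fubini') measurable
    also have "\<dots> = (\<integral>\<^sup>+x. indicator {p1..p2} x * Lf f x + indicator {p1..p2} x * Lf g (\<sigma> - x) \<partial>lborel)"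
      unfolding Lf_def
      by (intro nn_integral_cong, subst nn_integral_add) (auto simp: nn_integral_cmult)
    also have "\<dots> = (\<integral>\<^sup>+x. indicator {p1..p2} x * Lf f x \<partial>lborel) + (\<integral>\<^sup>+x. indicator {p1..p2} x * Lf g (\<sigma> - x) \<partial>lborel)"
      using Lf_meas[OF hf] Lf_meas[OF hg] by (intro nn_integral_add) auto
    also have "(\<integral>\<^sup>+x. indicator {p1..p2} x * Lf g (\<sigma> - x) \<partial>lborel) = (\<integral>\<^sup>+x. indicator {\<sigma> - p2..\<sigma> - p1} x * Lf g x \<partial>lborel)"
    proof -
      have m: "(\<lambda>x. indicator {\<sigma> - p2..\<sigma> - p1} x * Lf g x) \<in> borel_measurable borel"
        using Lf_meas[OF hg] by measurable
      show ?thesis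
        using nn_integral_real_affine[OF m, of "-1" \<sigma>]
        by (simp add: indicator_def conj_commute)
    qed
    also have "(\<integral>\<^sup>+x. indicator {p1..p2} x * Lf f x \<partial>lborel) + (\<integral>\<^sup>+x. indicator {\<sigma> - p2..\<sigma> - p1} x * Lf g x \<partial>lborel) < \<infinity>"
      using Lf_fin_interval[OF f, of p1 p2] Lf_fin_interval[OF g, of "\<sigma> - p2" "\<sigma> - p1"] p by simp
    finally show ?thesis .
  qed
  show ?thesis using strip_core[OF holH p(2) int1 int2 finS] unfolding HC .
qed

lemma Lf_self:
  assumes hf: "f holomorphic_on RHP" and s: "s > 0" and fs: "Lf f s < \<infinity>"
  shows "ennreal (cmod (LINT y|lborel. f (Complex s y) * cnj (f (Complex s y)))) = Lf f s"
proof -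
  have [measurable]: "fz f \<in> borel_measurable borel" using fz_meas hf by auto
  have e: "f (Complex s y) * cnj (f (Complex s y)) = complex_of_real ((cmod (fz f (Complex s y)))\<^sup>2)" for y
    unfolding complex_norm_square using s by (simp add: fz_def RHP_def)
  have "(LINT y|lborel. f (Complex s y) * cnj (f (Complex s y))) = of_real (LINT y|lborel. (cmod (fz f (Complex s y)))\<^sup>2)"
    unfolding e by (rule integral_complex_of_real)
  also have "(LINT y|lborel. (cmod (fz f (Complex s y)))\<^sup>2) = enn2real (Lf f s)"
    unfolding Lf_def by (rule integral_eq_nn_integral) auto
  finally show ?thesis using fs by (simp add: less_top[symmetric])
qed

lemma Lf_local_bound:
  assumes f: "f \<in> bergman_space \<alpha>" and r: "0 < r" and s: "r < s" "s \<le> 2 * r" and fs: "Lf f s < \<infinity>"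
  shows "ennreal r * Lf f s \<le> 2 * (\<integral>\<^sup>+x. indicator {r/2..4 * r} x * Lf f x \<partial>lborel)"
proof -
  have hf: "f holomorphic_on RHP" using f space_holo by auto
  have [measurable]: "Lf f \<in> borel_measurable borel" using Lf_meas[OF hf] .
  define A where "A = (\<integral>\<^sup>+x. indicator {r/2..4 * r} x * Lf f x \<partial>lborel)"
  have key: "2 * Lf f s \<le> Lf f u + Lf f (2 * s - u)" if u: "r/2 \<le> u" "u \<le> r" for u
  proof (cases "Lf f u < \<infinity> \<and> Lf f (2 * s - u) < \<infinity>")
    case False
    then have "Lf f u = \<infinity> \<or> Lf f (2 * s - u) = \<infinity>" by (auto simp: less_top[symmetric])
    then show ?thesis by auto
  next
    case True
    have fs': "Lf f (2 * s - s) < \<infinity>" using fs by simp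
    have ls: "(LINT y|lborel. f (Complex u y) * cnj (f (Complex (2 * s - u) y))) =
         (LINT y|lborel. f (Complex s y) * cnj (f (Complex (2 * s - s) y)))"
      by (rule line_symm[OF f f _ _ _ _ fs _ fs']) (use u r s True in auto)
    have "2 * ennreal (cmod (LINT y|lborel. f (Complex u y) * cnj (f (Complex (2 * s - u) y)))) \<le> Lf f u + Lf f (2 * s - u)"
      by (rule line_integrable(2)[OF hf hf]) (use u r s True in auto)
    moreover have "ennreal (cmod (LINT y|lborel. f (Complex u y) * cnj (f (Complex (2 * s - u) y)))) = Lf f s"
      unfolding ls using Lf_self[OF hf _ fs] r s by simp
    ultimately show ?thesis by simp
  qed
  have "ennreal r * Lf f s = (\<integral>\<^sup>+u. (2 * Lf f s) * indicator {r/2..r} u \<partial>lborel)"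
  proof -
    have "(\<integral>\<^sup>+u. (2 * Lf f s) * indicator {r/2..r} u \<partial>lborel) = (2 * Lf f s) * ennreal (r - r/2)"
      using r by (simp add: nn_integral_cmult_indicator)
    also have "\<dots> = ennreal r * Lf f s"
    proof -
      have "ennreal r = ennreal (2 * (r - r/2))" by simp
      also have "\<dots> = ennreal 2 * ennreal (r - r/2)" using r by (intro ennreal_mult) auto
      finally have "2 * ennreal (r - r/2) = ennreal r" by simp
      then show ?thesis by (metis mult.assoc mult.commute)
    qed
    finally show ?thesis by simp
  qed
  also have "\<dots> \<le> (\<integral>\<^sup>+u. indicator {r/2..r} u * Lf f u + indicator {r/2..r} u * Lf f (2 * s - u) \<partial>lborel)"
  proof (intro nn_integral_mono)
    fix u
    show "2 * Lf f s * indicator {r / 2..r} u \<le> indicator {r/2..r} u * Lf f u + indicator {r/2..r} u * Lf f (2 * s - u)"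
      using key[of u] by (auto simp: indicator_def)
  qed
  also have "\<dots> = (\<integral>\<^sup>+u. indicator {r/2..r} u * Lf f u \<partial>lborel) + (\<integral>\<^sup>+u. indicator {r/2..r} u * Lf f (2 * s - u) \<partial>lborel)"
    by (rule nn_integral_add) auto
  finally have c1: "ennreal r * Lf f s \<le> (\<integral>\<^sup>+u. indicator {r/2..r} u * Lf f u \<partial>lborel) + (\<integral>\<^sup>+u. indicator {r/2..r} u * Lf f (2 * s - u) \<partial>lborel)" .
  have c2: "(\<integral>\<^sup>+u. indicator {r/2..r} u * Lf f u \<partial>lborel) \<le> A"
    unfolding A_def using r by (intro nn_integral_mono) (auto simp: indicator_def)
  have "(\<integral>\<^sup>+u. indicator {r/2..r} u * Lf f (2 * s - u) \<partial>lborel) = (\<integral>\<^sup>+v. indicator {2 * s - r..2 * s - r/2} v * Lf f v \<partial>lborel)"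
  proof -
    have m: "(\<lambda>x. indicator {2 * s - r..2 * s - r/2} x * Lf f x) \<in> borel_measurable borel" by measurable
    show ?thesis
      using nn_integral_real_affine[OF m, of "-1" "2 * s"]
      by (simp add: indicator_def conj_commute)
  qed
  also have "\<dots> \<le> A"
    unfolding A_def using r s by (intro nn_integral_mono) (auto simp: indicator_def)
  finally have c3: "(\<integral>\<^sup>+u. indicator {r/2..r} u * Lf f (2 * s - u) \<partial>lborel) \<le> A" .
  have "ennreal r * Lf f s \<le> A + A" using c1 c2 c3 by (meson add_mono order_trans)
  then show ?thesis unfolding A_def[symmetric] by (simp add: mult_2)
qed

lemma powr_nn_fin:
  assumes a: "\<alpha> > -1" and r: "r \<ge> 0"
  shows "(\<integral>\<^sup>+x. indicator {0..r} x * ennreal (x powr \<alpha>) \<partial>lborel) < \<infinity>"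
proof -
  have "(\<lambda>x. x powr \<alpha>) integrable_on {0..r}"
    using has_integral_powr_from_0[OF a r] by blast
  then have "(\<lambda>x. x powr \<alpha>) absolutely_integrable_on {0..r}"
    by (rule nonnegative_absolutely_integrable_1) auto
  then have "integrable lebesgue (\<lambda>x. indicator {0..r} x *\<^sub>R (x powr \<alpha>))"
    by (simp add: set_integrable_def)
  then have "integrable lborel (\<lambda>x. indicator {0..r} x *\<^sub>R (x powr \<alpha>))"
    by (subst integrable_completion[symmetric]) auto
  then have "(\<integral>\<^sup>+x. ennreal (norm (indicator {0..r} x *\<^sub>R (x powr \<alpha>))) \<partial>lborel) < \<infinity>"
    by (simp add: integrable_iff_bounded)
  moreover have "(\<integral>\<^sup>+x. ennreal (norm (indicator {0..r} x *\<^sub>R (x powr \<alpha>))) \<partial>lborel) =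
      (\<integral>\<^sup>+x. indicator {0..r} x * ennreal (x powr \<alpha>) \<partial>lborel)"
    by (intro nn_integral_cong) (auto simp: indicator_def)
  ultimately show ?thesis by simp
qed

lemma transl_holo:
  assumes "f holomorphic_on RHP" "Re c \<ge> 0"
  shows "(\<lambda>z. f (z + c)) holomorphic_on RHP"
proof -
  have "(f \<circ> (\<lambda>z. z + c)) holomorphic_on RHP"
    by (rule holomorphic_on_compose_gen[OF _ assms(1)]) (use assms(2) in \<open>auto simp: RHP_def intro!: holomorphic_intros\<close>)
  then show ?thesis by (simp add: comp_def)
qed

lemma Lf_transl:
  assumes "x > 0" "r \<ge> 0"
  shows "Lf (\<lambda>z. f (z + of_real r)) x = Lf f (x + r)"
proof -
  have e: "Complex x y + complex_of_real r = Complex (x + r) y" for y by (simp add: complex_eq_iff)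
  show ?thesis using assms by (simp add: Lf_pos e)
qed

lemma K_bound:
  fixes x r \<alpha> :: real
  assumes r: "r > 0" and x: "x \<ge> r"
  shows "x powr \<alpha> \<le> max 1 (2 powr (-\<alpha>)) * (x + r) powr \<alpha>"
proof (cases "\<alpha> \<ge> 0")
  case True
  have "x powr \<alpha> \<le> (x + r) powr \<alpha>" by (rule powr_mono2) (use r x True in auto)
  also have "\<dots> \<le> max 1 (2 powr (-\<alpha>)) * (x + r) powr \<alpha>"
    using mult_right_mono[of 1 "max 1 (2 powr (-\<alpha>))" "(x + r) powr \<alpha>"] by simp
  finally show ?thesis .
next
  case False
  have "(2 * x) powr \<alpha> \<le> (x + r) powr \<alpha>" using r x False by (intro powr_mono2') auto
  moreover have "(2 * x) powr \<alpha> = 2 powr \<alpha> * x powr \<alpha>" using r x by (simp add: powr_mult)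
  moreover have "2 powr (-\<alpha>) * 2 powr \<alpha> = (1::real)" by (simp add: powr_add[symmetric])
  ultimately have "x powr \<alpha> \<le> 2 powr (-\<alpha>) * (x + r) powr \<alpha>"
    by (metis (no_types, opaque_lifting) mult.assoc mult_left_mono mult_1 powr_ge_zero)
  also have "\<dots> \<le> max 1 (2 powr (-\<alpha>)) * (x + r) powr \<alpha>"
    by (intro mult_right_mono) auto
  finally show ?thesis .
qed

lemma transl_space:
  assumes f: "f \<in> bergman_space \<alpha>" and a: "\<alpha> > -1" and r: "r > 0"
  shows "(\<lambda>z. f (z + of_real r)) \<in> bergman_space \<alpha>"
proof -
  have hf: "f holomorphic_on RHP" using f space_holo by auto
  have hg: "(\<lambda>z. f (z + of_real r)) holomorphic_on RHP" by (rule transl_holo[OF hf]) (use r in simp)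
  have [measurable]: "Lf f \<in> borel_measurable borel" using Lf_meas[OF hf] .
  define A where "A = (\<integral>\<^sup>+x. indicator {r/2..4 * r} x * Lf f x \<partial>lborel)"
  have Afin: "A < \<infinity>" unfolding A_def by (rule Lf_fin_interval[OF f]) (use r in simp)
  define C where "C = ennreal (1/r) * (2 * A)"
  have Cfin: "C < \<infinity>" using Afin by (simp add: C_def ennreal_mult_less_top)
  define K where "K = max 1 (2 powr (-\<alpha>))"
  have AE1: "AE x in lborel. r + 1 * x > 0 \<longrightarrow> Lf f (r + 1 * x) < \<infinity>"
    by (rule AE_borel_affine[where P="\<lambda>s. s > 0 \<longrightarrow> Lf f s < \<infinity>"]) (use Lf_AE_fin[OF f] in auto)
  have AEb: "AE x in lborel. ennreal (x powr \<alpha>) * Lf (\<lambda>z. f (z + of_real r)) x \<le>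
      ennreal K * (ennreal ((x + r) powr \<alpha>) * Lf f (x + r)) + C * (indicator {0..r} x * ennreal (x powr \<alpha>))"
    using AE1
  proof eventually_elim
    case (elim x)
    show ?case
    proof (cases "x > 0")
      case False
      then show ?thesis by (simp add: Lf_nonpos)
    next
      case True
      have L: "Lf (\<lambda>z. f (z + of_real r)) x = Lf f (x + r)" using Lf_transl[OF True] r by simp
      show ?thesis
      proof (cases "x \<ge> r")
        case True
        have "ennreal (x powr \<alpha>) \<le> ennreal (K * (x + r) powr \<alpha>)"
          unfolding K_def by (rule ennreal_leI, rule K_bound) (use r True in auto)
        also have "\<dots> = ennreal K * ennreal ((x + r) powr \<alpha>)" by (simp add: K_def ennreal_mult)
        finally have "ennreal (x powr \<alpha>) * Lf f (x + r) \<le> ennreal K * ennreal ((x + r) powr \<alpha>) * Lf f (x + r)"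
          by (rule mult_right_mono) auto
        then show ?thesis unfolding L by (simp add: mult.assoc add_increasing2)
      next
        case False
        have fin: "Lf f (x + r) < \<infinity>" using elim \<open>x > 0\<close> r by (simp add: add.commute)
        have "ennreal r * Lf f (x + r) \<le> 2 * A"
          unfolding A_def by (rule Lf_local_bound[OF f r _ _ fin]) (use False \<open>x > 0\<close> in auto)
        then have "ennreal (1/r) * (ennreal r * Lf f (x + r)) \<le> C"
          unfolding C_def by (rule mult_left_mono) auto
        moreover have "ennreal (1/r) * (ennreal r * Lf f (x + r)) = Lf f (x + r)"
        proof -
          have "ennreal (1/r) * ennreal r = ennreal (1/r * r)" using r by (subst ennreal_mult) auto
          also have "\<dots> = 1" using r by simp
          finally show ?thesis by (simp add: mult.assoc[symmetric])
        qed
        ultimately have "Lf f (x + r) \<le> C" by simp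
        then have "ennreal (x powr \<alpha>) * Lf f (x + r) \<le> ennreal (x powr \<alpha>) * C" by (rule mult_left_mono) auto
        also have "\<dots> = C * (indicator {0..r} x * ennreal (x powr \<alpha>))"
          using False \<open>x > 0\<close> by (simp add: indicator_def mult.commute)
        finally show ?thesis unfolding L by (simp add: add_increasing)
      qed
    qed
  qed
  have "(\<integral>\<^sup>+x. ennreal (x powr \<alpha>) * Lf (\<lambda>z. f (z + of_real r)) x \<partial>lborel) \<le>
      (\<integral>\<^sup>+x. ennreal K * (ennreal ((x + r) powr \<alpha>) * Lf f (x + r)) + C * (indicator {0..r} x * ennreal (x powr \<alpha>)) \<partial>lborel)"
    by (rule nn_integral_mono_AE[OF AEb])
  also have "\<dots> = ennreal K * (\<integral>\<^sup>+x. ennreal ((x + r) powr \<alpha>) * Lf f (x + r) \<partial>lborel) + C * (\<integral>\<^sup>+x. indicator {0..r} x * ennreal (x powr \<alpha>) \<partial>lborel)"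
    by (subst nn_integral_add) (auto simp: nn_integral_cmult)
  also have "(\<integral>\<^sup>+x. ennreal ((x + r) powr \<alpha>) * Lf f (x + r) \<partial>lborel) = (\<integral>\<^sup>+x. ennreal (x powr \<alpha>) * Lf f x \<partial>lborel)"
  proof -
    have m: "(\<lambda>x. ennreal (x powr \<alpha>) * Lf f x) \<in> borel_measurable borel" by measurable
    show ?thesis using nn_integral_real_affine[OF m, of 1 r] by (simp add: add.commute)
  qed
  also have "ennreal K * (\<integral>\<^sup>+x. ennreal (x powr \<alpha>) * Lf f x \<partial>lborel) + C * (\<integral>\<^sup>+x. indicator {0..r} x * ennreal (x powr \<alpha>) \<partial>lborel) < \<infinity>"
    using space_fin[OF f] Cfin powr_nn_fin[OF a, of r] r by (simp add: ennreal_mult_less_top)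
  finally show ?thesis using space_iff[OF hg] by simp
qed

definition IF :: "real \<Rightarrow> (complex \<Rightarrow> complex) \<Rightarrow> (complex \<Rightarrow> complex) \<Rightarrow> complex \<Rightarrow> complex" where
  "IF \<alpha> f g z = indicator RHP z *\<^sub>R (f z * cnj (g z) * complex_of_real (Re z powr \<alpha>))"

lemma inner_IF: "bergman_inner \<alpha> f g = (1 / pi) * integral\<^sup>L lborel (IF \<alpha> f g)"
  unfolding bergman_inner_def set_lebesgue_integral_def IF_def[abs_def] ..

lemma space_int_fz:
  assumes f: "f \<in> bergman_space \<alpha>"
  shows "integrable lborel (\<lambda>z. (cmod (fz f z))\<^sup>2 * Re z powr \<alpha>)"
proof -
  have "integrable lborel (\<lambda>z. indicator RHP z *\<^sub>R ((cmod (f z))\<^sup>2 * Re z powr \<alpha>))"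
    using f unfolding bergman_space_def set_integrable_def by auto
  moreover have "(\<lambda>z. indicator RHP z *\<^sub>R ((cmod (f z))\<^sup>2 * Re z powr \<alpha>)) = (\<lambda>z. (cmod (fz f z))\<^sup>2 * Re z powr \<alpha>)"
    by (auto simp: fun_eq_iff fz_def indicator_def)
  ultimately show ?thesis by simp
qed

lemma inner_int:
  assumes f: "f \<in> bergman_space \<alpha>" and g: "g \<in> bergman_space \<alpha>"
  shows "integrable lborel (IF \<alpha> f g)"
proof -
  have [measurable]: "fz f \<in> borel_measurable borel" "fz g \<in> borel_measurable borel"
    using fz_meas f g space_holo by auto
  have eq: "IF \<alpha> f g = (\<lambda>z. fz f z * cnj (fz g z) * complex_of_real (Re z powr \<alpha>))"
    by (auto simp: fun_eq_iff fz_def indicator_def IF_def)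
  have "integrable lborel (\<lambda>z. (cmod (fz f z))\<^sup>2 * Re z powr \<alpha> + (cmod (fz g z))\<^sup>2 * Re z powr \<alpha>)"
    using space_int_fz[OF f] space_int_fz[OF g] by (rule Bochner_Integration.integrable_add)
  then have "integrable lborel (\<lambda>z. fz f z * cnj (fz g z) * complex_of_real (Re z powr \<alpha>))"
  proof (rule Bochner_Integration.integrable_bound)
    show "(\<lambda>z. fz f z * cnj (fz g z) * complex_of_real (Re z powr \<alpha>)) \<in> borel_measurable lborel"
      by measurable
    show "AE z in lborel. norm (fz f z * cnj (fz g z) * complex_of_real (Re z powr \<alpha>)) \<le>
        norm ((cmod (fz f z))\<^sup>2 * Re z powr \<alpha> + (cmod (fz g z))\<^sup>2 * Re z powr \<alpha>)"
    proof (rule AE_I2)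
      fix z
      have "cmod (fz f z) * cmod (fz g z) \<le> (cmod (fz f z))\<^sup>2 + (cmod (fz g z))\<^sup>2"
        using ab_le[of "fz f z" "fz g z"] by (smt (verit) mult_nonneg_nonneg norm_ge_zero)
      then have "cmod (fz f z) * cmod (fz g z) * Re z powr \<alpha> \<le> ((cmod (fz f z))\<^sup>2 + (cmod (fz g z))\<^sup>2) * Re z powr \<alpha>"
        by (rule mult_right_mono) auto
      then show "norm (fz f z * cnj (fz g z) * complex_of_real (Re z powr \<alpha>)) \<le>
        norm ((cmod (fz f z))\<^sup>2 * Re z powr \<alpha> + (cmod (fz g z))\<^sup>2 * Re z powr \<alpha>)"
        by (simp add: norm_mult algebra_simps)
    qed
  qed
  then show ?thesis unfolding eq .
qed

lemma fubini_complex_int: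
  fixes h :: "complex \<Rightarrow> complex"
  assumes int: "integrable lborel h"
  shows "integrable lborel (\<lambda>x. LINT y|lborel. h (Complex x y))"
proof -
  have m[measurable]: "h \<in> borel_measurable borel" using int by auto
  have mC: "(\<lambda>p. Complex (fst p) (snd p)) \<in> measurable (lborel \<Otimes>\<^sub>M lborel) borel" by measurable
  have "integrable (distr (lborel \<Otimes>\<^sub>M lborel) borel (\<lambda>(x,y). Complex x y)) h"
    using int by (simp add: lborel_complex)
  then have i: "integrable (lborel \<Otimes>\<^sub>M lborel) (\<lambda>p. h (Complex (fst p) (snd p)))"
    using integrable_distr_eq[OF mC m] by (simp add: case_prod_beta')
  show ?thesis using lborel_pair.integrable_fst'[OF i] by simp
qed

lemma transl_adj_real:
  assumes f: "f \<in> bergman_space \<alpha>" and g: "g \<in> bergman_space \<alpha>" and a: "\<alpha> > -1" and r: "r > 0"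
  shows "bergman_inner \<alpha> (\<lambda>z. f (z + of_real r)) g = bergman_inner \<alpha> f (\<lambda>z. g (z + of_real r))"
proof -
  let ?tf = "\<lambda>z. f (z + of_real r)" and ?tg = "\<lambda>z. g (z + of_real r)"
  have tf: "?tf \<in> bergman_space \<alpha>" and tg: "?tg \<in> bergman_space \<alpha>"
    using transl_space[OF f a r] transl_space[OF g a r] by auto
  have i1: "integrable lborel (IF \<alpha> ?tf g)" by (rule inner_int[OF tf g])
  have i2: "integrable lborel (IF \<alpha> f ?tg)" by (rule inner_int[OF f tg])
  have AE: "AE x in lborel. (LINT y|lborel. IF \<alpha> ?tf g (Complex x y)) = (LINT y|lborel. IF \<alpha> f ?tg (Complex x y))"
    using Lf_AE_fin[OF f] Lf_AE_fin[OF g] Lf_AE_fin[OF tf] Lf_AE_fin[OF tg]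
  proof eventually_elim
    case (elim x)
    show ?case
    proof (cases "x > 0")
      case False
      then show ?thesis by (simp add: IF_def RHP_def)
    next
      case True
      have e: "Complex x y + complex_of_real r = Complex (x + r) y" for y by (simp add: complex_eq_iff)
      have F1: "IF \<alpha> ?tf g (Complex x y) = f (Complex (x + r) y) * cnj (g (Complex x y)) * complex_of_real (x powr \<alpha>)" for y
        using True by (simp add: IF_def RHP_def e)
      have F2: "IF \<alpha> f ?tg (Complex x y) = f (Complex x y) * cnj (g (Complex (x + r) y)) * complex_of_real (x powr \<alpha>)" for y
        using True by (simp add: IF_def RHP_def e)
      have fx: "Lf f x < \<infinity>" and gx: "Lf g x < \<infinity>" using elim True by auto
      have fxr: "Lf f (x + r) < \<infinity>" using elim True Lf_transl[OF True, of r f] r by auto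
      have gxr: "Lf g (x + r) < \<infinity>" using elim True Lf_transl[OF True, of r g] r by auto
      have ls: "(LINT y|lborel. f (Complex x y) * cnj (g (Complex ((2 * x + r) - x) y))) =
          (LINT y|lborel. f (Complex (x + r) y) * cnj (g (Complex ((2 * x + r) - (x + r)) y)))"
        by (rule line_symm[OF f g]) (use True r fx fxr gx gxr in auto)
      have s1: "(2 * x + r) - x = x + r" and s2: "(2 * x + r) - (x + r) = x" by simp_all
      show ?thesis unfolding F1 F2 integral_mult_left_zero using ls unfolding s1 s2 by simp
    qed
  qed
  have "integral\<^sup>L lborel (IF \<alpha> ?tf g) = (LINT x|lborel. LINT y|lborel. IF \<alpha> ?tf g (Complex x y))"
    by (rule fubini_complex(2)[OF i1])
  also have "\<dots> = (LINT x|lborel. LINT y|lborel. IF \<alpha> f ?tg (Complex x y))"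
    by (rule integral_cong_AE[OF _ _ AE])
       (use fubini_complex_int[OF i1] fubini_complex_int[OF i2] in auto)
  also have "\<dots> = integral\<^sup>L lborel (IF \<alpha> f ?tg)"
    by (rule fubini_complex(2)[OF i2, symmetric])
  finally show ?thesis unfolding inner_IF by simp
qed

lemma cv_nn:
  fixes F :: "complex \<Rightarrow> ennreal" and c :: real
  assumes c: "c \<noteq> 0" and [measurable]: "F \<in> borel_measurable borel"
  shows "(\<integral>\<^sup>+x. F x \<partial>lborel) = ennreal (c\<^sup>2) * (\<integral>\<^sup>+x. F (t + c *\<^sub>R x) \<partial>lborel)"
proof -
  have "(\<integral>\<^sup>+x. F x \<partial>lborel) = (\<integral>\<^sup>+x. F x \<partial>density (distr lborel borel (\<lambda>x. t + c *\<^sub>R x)) (\<lambda>_. \<bar>c\<bar> ^ DIM(complex)))"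
    using lborel_affine[OF c, of t] by simp
  also have "\<dots> = (\<integral>\<^sup>+x. ennreal (\<bar>c\<bar> ^ DIM(complex)) * F x \<partial>distr lborel borel (\<lambda>x. t + c *\<^sub>R x))"
    by (subst nn_integral_density) auto
  also have "\<dots> = (\<integral>\<^sup>+x. ennreal (\<bar>c\<bar> ^ DIM(complex)) * F (t + c *\<^sub>R x) \<partial>lborel)"
    by (subst nn_integral_distr) auto
  also have "\<dots> = ennreal (c\<^sup>2) * (\<integral>\<^sup>+x. F (t + c *\<^sub>R x) \<partial>lborel)"
    by (subst nn_integral_cmult) auto
  finally show ?thesis .
qed

lemma cv_int:
  fixes F :: "complex \<Rightarrow> complex" and c :: real
  assumes c: "c \<noteq> 0" and [measurable]: "F \<in> borel_measurable borel"
  shows "integral\<^sup>L lborel F = complex_of_real (c\<^sup>2) * integral\<^sup>L lborel (\<lambda>x. F (t + c *\<^sub>R x))"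
proof -
  have "integral\<^sup>L lborel F = integral\<^sup>L (density (distr lborel borel (\<lambda>x. t + c *\<^sub>R x)) (\<lambda>_. \<bar>c\<bar> ^ DIM(complex))) F"
    using lborel_affine[OF c, of t] by simp
  also have "\<dots> = integral\<^sup>L (distr lborel borel (\<lambda>x. t + c *\<^sub>R x)) (\<lambda>x. (\<bar>c\<bar> ^ DIM(complex)) *\<^sub>R F x)"
    by (subst integral_density) auto
  also have "\<dots> = integral\<^sup>L lborel (\<lambda>x. (\<bar>c\<bar> ^ DIM(complex)) *\<^sub>R F (t + c *\<^sub>R x))"
    by (subst integral_distr) auto
  also have "\<dots> = complex_of_real (c\<^sup>2) * integral\<^sup>L lborel (\<lambda>x. F (t + c *\<^sub>R x))"
    by (simp add: scaleR_conv_of_real)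
  finally show ?thesis .
qed

lemma aff_holo:
  assumes "f holomorphic_on RHP" "c > 0" "Re t = 0"
  shows "(\<lambda>z. f (of_real c * z + t)) holomorphic_on RHP"
proof -
  have "(f \<circ> (\<lambda>z. of_real c * z + t)) holomorphic_on RHP"
    by (rule holomorphic_on_compose_gen[OF _ assms(1)]) (use assms(2,3) in \<open>auto simp: RHP_def intro!: holomorphic_intros\<close>)
  then show ?thesis by (simp add: comp_def)
qed

lemma aff_pt: "t + c *\<^sub>R z = of_real c * z + t"
  by (simp add: scaleR_conv_of_real)

lemma Re_aff: "Re t = 0 \<Longrightarrow> Re (of_real c * z + t) = c * Re z"
  by simp

lemma powr_aff: "c > 0 \<Longrightarrow> Re z > 0 \<Longrightarrow> (c * Re z) powr \<alpha> = c powr \<alpha> * Re z powr \<alpha>"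
  by (simp add: powr_mult)

lemma aff_space:
  assumes f: "f \<in> bergman_space \<alpha>" and c: "c > 0" and t: "Re t = 0"
  shows "(\<lambda>z. f (of_real c * z + t)) \<in> bergman_space \<alpha>"
proof -
  have hf: "f holomorphic_on RHP" using f space_holo by auto
  define G where "G u = indicator RHP u *\<^sub>R ((cmod (f u))\<^sup>2 * Re u powr \<alpha>)" for u
  have iG: "integrable lborel G" using f unfolding bergman_space_def set_integrable_def G_def[abs_def] by auto
  have mG[measurable]: "G \<in> borel_measurable borel" using iG by auto
  have "(\<integral>\<^sup>+x. ennreal (norm (G x)) \<partial>lborel) = ennreal (c\<^sup>2) * (\<integral>\<^sup>+x. ennreal (norm (G (t + c *\<^sub>R x))) \<partial>lborel)"
    by (rule cv_nn) (use c in auto)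
  moreover have "(\<integral>\<^sup>+x. ennreal (norm (G x)) \<partial>lborel) < \<infinity>" using iG by (simp add: integrable_iff_bounded)
  ultimately have "(\<integral>\<^sup>+x. ennreal (norm (G (t + c *\<^sub>R x))) \<partial>lborel) < \<infinity>"
    using c by (auto simp: ennreal_mult_less_top ennreal_mult_eq_top_iff top.not_eq_extremum)
  then have iG2: "integrable lborel (\<lambda>x. G (t + c *\<^sub>R x))"
    by (subst integrable_iff_bounded) auto
  have eq: "indicator RHP z *\<^sub>R ((cmod (f (of_real c * z + t)))\<^sup>2 * Re z powr \<alpha>) = c powr (-\<alpha>) * G (t + c *\<^sub>R z)" for z
  proof (cases "Re z > 0")
    case True
    have "c powr (-\<alpha>) * (c * Re z) powr \<alpha> = Re z powr \<alpha>"
      using c True by (simp add: powr_mult powr_minus field_simps)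
    then show ?thesis using True c t by (simp add: G_def aff_pt RHP_def indicator_def)
  next
    case False
    then show ?thesis using c t by (simp add: G_def aff_pt RHP_def indicator_def zero_less_mult_iff)
  qed
  have "integrable lborel (\<lambda>z. c powr (-\<alpha>) * G (t + c *\<^sub>R z))"
    using iG2 by (rule integrable_mult_right)
  then have "set_integrable lborel RHP (\<lambda>z. (cmod (f (of_real c * z + t)))\<^sup>2 * Re z powr \<alpha>)"
    unfolding set_integrable_def eq .
  then show ?thesis using aff_holo[OF hf c t] unfolding bergman_space_def by auto
qed

lemma aff_inv_space:
  assumes g: "g \<in> bergman_space \<alpha>" and c: "c > 0" and t: "Re t = 0"
  shows "(\<lambda>z. g ((z - t) / of_real c)) \<in> bergman_space \<alpha>"
proof -
  have "(\<lambda>z. g (of_real (1/c) * z + (- t / of_real c))) \<in> bergman_space \<alpha>"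
    by (rule aff_space[OF g]) (use c t in auto)
  moreover have "(\<lambda>z. g (of_real (1/c) * z + (- t / of_real c))) = (\<lambda>z. g ((z - t) / of_real c))"
    by (auto simp: fun_eq_iff diff_divide_distrib)
  ultimately show ?thesis by simp
qed

lemma aff_adj:
  assumes f: "f \<in> bergman_space \<alpha>" and g: "g \<in> bergman_space \<alpha>" and c: "c > 0" and t: "Re t = 0"
  shows "bergman_inner \<alpha> (\<lambda>z. f (of_real c * z + t)) g =
     complex_of_real (c powr (-2-\<alpha>)) * bergman_inner \<alpha> f (\<lambda>z. g ((z - t) / of_real c))"
proof -
  let ?g' = "\<lambda>z. g ((z - t) / of_real c)"
  have g': "?g' \<in> bergman_space \<alpha>" by (rule aff_inv_space[OF g c t])
  have iP: "integrable lborel (IF \<alpha> f ?g')" by (rule inner_int[OF f g'])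
  then have [measurable]: "IF \<alpha> f ?g' \<in> borel_measurable borel" by auto
  have cv: "integral\<^sup>L lborel (IF \<alpha> f ?g') = complex_of_real (c\<^sup>2) * integral\<^sup>L lborel (\<lambda>z. IF \<alpha> f ?g' (t + c *\<^sub>R z))"
    by (rule cv_int) (use c in auto)
  have pt: "IF \<alpha> f ?g' (t + c *\<^sub>R z) = complex_of_real (c powr \<alpha>) * IF \<alpha> (\<lambda>z. f (of_real c * z + t)) g z" for z
  proof (cases "Re z > 0")
    case True
    have e: "(of_real c * z + t - t) / of_real c = z" using c by simp
    have "(c * Re z) powr \<alpha> = c powr \<alpha> * Re z powr \<alpha>" using c True by (simp add: powr_mult)
    then show ?thesis using True c t
      by (simp add: IF_def aff_pt e RHP_def indicator_def of_real_mult[symmetric] del: of_real_mult)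
  next
    case False
    then show ?thesis using c t by (simp add: IF_def aff_pt RHP_def indicator_def zero_less_mult_iff)
  qed
  have "integral\<^sup>L lborel (IF \<alpha> f ?g') = complex_of_real (c\<^sup>2 * c powr \<alpha>) * integral\<^sup>L lborel (IF \<alpha> (\<lambda>z. f (of_real c * z + t)) g)"
    unfolding cv pt by simp
  moreover have "c powr (-2-\<alpha>) * (c\<^sup>2 * c powr \<alpha>) = 1"
  proof -
    have "c\<^sup>2 * c powr \<alpha> = c powr (2 + \<alpha>)" using c by (simp add: powr_add powr_numeral)
    moreover have "c powr (-2-\<alpha>) = inverse (c powr (2 + \<alpha>))"
    proof -
      have "(-2-\<alpha>) = -(2+\<alpha>)" by simp
      then show ?thesis by (simp only: powr_minus)
    qed
    moreover have "c powr (2 + \<alpha>) > 0" using c by simp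
    ultimately show ?thesis by simp
  qed
  ultimately have "complex_of_real (c powr (-2-\<alpha>)) * integral\<^sup>L lborel (IF \<alpha> f ?g') = integral\<^sup>L lborel (IF \<alpha> (\<lambda>z. f (of_real c * z + t)) g)"
    by (simp only: mult.assoc[symmetric] of_real_mult[symmetric]) simp
  then show ?thesis unfolding inner_IF by simp
qed

lemma transl_decomp:
  "(\<lambda>z. f (z + b)) = (\<lambda>z. (\<lambda>w. f (of_real 1 * w + \<i> * of_real (Im b))) (z + of_real (Re b)))"
proof -
  have e: "x + of_real (Re b) + \<i> * of_real (Im b) = x + b" for x by (simp add: complex_eq_iff)
  show ?thesis by (simp add: fun_eq_iff e)
qed

lemma transl_space_gen:
  assumes f: "f \<in> bergman_space \<alpha>" and a: "\<alpha> > -1" and b: "Re b \<ge> 0"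
  shows "(\<lambda>z. f (z + b)) \<in> bergman_space \<alpha>"
proof -
  let ?h = "\<lambda>w. f (of_real 1 * w + \<i> * of_real (Im b))"
  have h: "?h \<in> bergman_space \<alpha>" by (rule aff_space[OF f]) auto
  show ?thesis
  proof (cases "Re b = 0")
    case True
    then show ?thesis unfolding transl_decomp using h by simp
  next
    case False
    then have "Re b > 0" using b by simp
    then show ?thesis unfolding transl_decomp using transl_space[OF h a] by blast
  qed
qed

lemma transl_adj_gen:
  assumes f: "f \<in> bergman_space \<alpha>" and g: "g \<in> bergman_space \<alpha>" and a: "\<alpha> > -1" and b: "Re b \<ge> 0"
  shows "bergman_inner \<alpha> (\<lambda>z. f (z + b)) g = bergman_inner \<alpha> f (\<lambda>z. g (z + cnj b))"
proof -
  let ?h = "\<lambda>w. f (of_real 1 * w + \<i> * of_real (Im b))"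
  let ?tg = "\<lambda>z. g (z + of_real (Re b))"
  have h: "?h \<in> bergman_space \<alpha>" by (rule aff_space[OF f]) auto
  have tg: "?tg \<in> bergman_space \<alpha>"
  proof (cases "Re b = 0")
    case True then show ?thesis using g by simp
  next
    case False then show ?thesis using transl_space[OF g a] b by simp
  qed
  have "bergman_inner \<alpha> (\<lambda>z. f (z + b)) g = bergman_inner \<alpha> (\<lambda>z. ?h (z + of_real (Re b))) g"
    unfolding transl_decomp ..
  also have "\<dots> = bergman_inner \<alpha> ?h ?tg"
  proof (cases "Re b = 0")
    case True then show ?thesis by simp
  next
    case False then show ?thesis using transl_adj_real[OF h g a] b by simp
  qed
  also have "\<dots> = complex_of_real (1 powr (-2-\<alpha>)) * bergman_inner \<alpha> f (\<lambda>z. ?tg ((z - \<i> * of_real (Im b)) / of_real 1))"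
    by (rule aff_adj[OF f tg]) auto
  also have "(\<lambda>z. ?tg ((z - \<i> * of_real (Im b)) / of_real 1)) = (\<lambda>z. g (z + cnj b))"
  proof -
    have e: "x - \<i> * of_real (Im b) + of_real (Re b) = x + cnj b" for x by (simp add: complex_eq_iff)
    show ?thesis by (simp add: fun_eq_iff e)
  qed
  finally show ?thesis by simp
qed

lemma space_scale:
  assumes f: "f \<in> bergman_space \<alpha>"
  shows "(\<lambda>z. of_real k * f z) \<in> bergman_space \<alpha>"
proof -
  have i1: "integrable lborel (\<lambda>z. indicator RHP z *\<^sub>R ((cmod (f z))\<^sup>2 * Re z powr \<alpha>))"
    using f unfolding bergman_space_def set_integrable_def by auto
  have eq: "(\<lambda>z. k\<^sup>2 * (indicator RHP z *\<^sub>R ((cmod (f z))\<^sup>2 * Re z powr \<alpha>))) =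
     (\<lambda>z. indicator RHP z *\<^sub>R ((cmod (of_real k * f z))\<^sup>2 * Re z powr \<alpha>))"
    by (auto simp: fun_eq_iff norm_mult power_mult_distrib)
  have i2: "integrable lborel (\<lambda>z. indicator RHP z *\<^sub>R ((cmod (of_real k * f z))\<^sup>2 * Re z powr \<alpha>))"
    unfolding eq[symmetric] by (rule integrable_mult_right) (rule i1)
  have "(\<lambda>z. of_real k * f z) holomorphic_on RHP" using f unfolding bergman_space_def
    by (auto intro!: holomorphic_intros)
  then show ?thesis using i2 unfolding bergman_space_def set_integrable_def by auto
qed

lemma inner_scale_right:
  "bergman_inner \<alpha> f (\<lambda>z. of_real k * h z) = of_real k * bergman_inner \<alpha> f h"
proof -
  have "(\<lambda>z. indicator RHP z *\<^sub>R (f z * cnj (of_real k * h z) * complex_of_real (Re z powr \<alpha>))) =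
     (\<lambda>z. of_real k * (indicator RHP z *\<^sub>R (f z * cnj (h z) * complex_of_real (Re z powr \<alpha>))))"
    by (auto simp: fun_eq_iff)
  then show ?thesis unfolding bergman_inner_def set_lebesgue_integral_def
    by (simp only: integral_mult_right_zero) simp
qed

definition Sop :: "real \<Rightarrow> real \<Rightarrow> complex \<Rightarrow> (complex \<Rightarrow> complex) \<Rightarrow> (complex \<Rightarrow> complex)" where
  "Sop \<alpha> a b g = (\<lambda>z. complex_of_real (a powr (-2-\<alpha>)) * g ((z + cnj b) / of_real a))"

lemma T_eq: "comp_op (\<lambda>w. of_real a * w + b) f = (\<lambda>z. (\<lambda>w. f (w + b)) (of_real a * z + 0))"
  by (simp add: comp_op_def fun_eq_iff)

lemma T_space:
  assumes f: "f \<in> bergman_space \<alpha>" and al: "\<alpha> > -1" and a: "a > 0" and b: "Re b \<ge> 0"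
  shows "comp_op (\<lambda>w. of_real a * w + b) f \<in> bergman_space \<alpha>"
  unfolding T_eq by (rule aff_space[OF transl_space_gen[OF f al b] a]) simp

lemma S_space:
  assumes g: "g \<in> bergman_space \<alpha>" and al: "\<alpha> > -1" and a: "a > 0" and b: "Re b \<ge> 0"
  shows "Sop \<alpha> a b g \<in> bergman_space \<alpha>"
proof -
  have g1: "(\<lambda>z. g ((z - 0) / of_real a)) \<in> bergman_space \<alpha>" by (rule aff_inv_space[OF g a]) simp
  have g2: "(\<lambda>z. (\<lambda>z. g ((z - 0) / of_real a)) (z + cnj b)) \<in> bergman_space \<alpha>"
    by (rule transl_space_gen[OF g1 al]) (use b in simp)
  show ?thesis unfolding Sop_def using space_scale[OF g2, of "a powr (-2-\<alpha>)"] by simp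
qed

lemma T_adj:
  assumes f: "f \<in> bergman_space \<alpha>" and g: "g \<in> bergman_space \<alpha>" and al: "\<alpha> > -1" and a: "a > 0" and b: "Re b \<ge> 0"
  shows "bergman_inner \<alpha> (comp_op (\<lambda>w. of_real a * w + b) f) g = bergman_inner \<alpha> f (Sop \<alpha> a b g)"
proof -
  have F: "(\<lambda>w. f (w + b)) \<in> bergman_space \<alpha>" by (rule transl_space_gen[OF f al b])
  have g1: "(\<lambda>z. g ((z - 0) / of_real a)) \<in> bergman_space \<alpha>" by (rule aff_inv_space[OF g a]) simp
  have "bergman_inner \<alpha> (comp_op (\<lambda>w. of_real a * w + b) f) g =
      complex_of_real (a powr (-2-\<alpha>)) * bergman_inner \<alpha> (\<lambda>w. f (w + b)) (\<lambda>z. g ((z - 0) / of_real a))"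
    unfolding T_eq by (rule aff_adj[OF F g a]) simp
  also have "bergman_inner \<alpha> (\<lambda>w. f (w + b)) (\<lambda>z. g ((z - 0) / of_real a)) =
      bergman_inner \<alpha> f (\<lambda>z. (\<lambda>z. g ((z - 0) / of_real a)) (z + cnj b))"
    by (rule transl_adj_gen[OF f g1 al b])
  also have "complex_of_real (a powr (-2-\<alpha>)) * bergman_inner \<alpha> f (\<lambda>z. (\<lambda>z. g ((z - 0) / of_real a)) (z + cnj b))
      = bergman_inner \<alpha> f (Sop \<alpha> a b g)"
    unfolding Sop_def by (subst inner_scale_right) simp
  finally show ?thesis .
qed

lemma S_adjoint:
  assumes al: "\<alpha> > -1" and a: "a > 0" and b: "Re b \<ge> 0"
  shows "is_adjoint_on \<alpha> (comp_op (\<lambda>w. of_real a * w + b)) (Sop \<alpha> a b)"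
  unfolding is_adjoint_on_def using S_space[OF _ al a b] T_adj[OF _ _ al a b] by blast

lemma space_diff:
  assumes f: "f \<in> bergman_space \<alpha>" and g: "g \<in> bergman_space \<alpha>"
  shows "(\<lambda>z. f z - g z) \<in> bergman_space \<alpha>"
proof -
  have [measurable]: "fz f \<in> borel_measurable borel" "fz g \<in> borel_measurable borel"
    using fz_meas f g space_holo by auto
  have eq: "(\<lambda>z. indicator RHP z *\<^sub>R ((cmod (f z - g z))\<^sup>2 * Re z powr \<alpha>)) = (\<lambda>z. (cmod (fz f z - fz g z))\<^sup>2 * Re z powr \<alpha>)"
    by (auto simp: fun_eq_iff fz_def indicator_def)
  have "integrable lborel (\<lambda>z. 2 * ((cmod (fz f z))\<^sup>2 * Re z powr \<alpha>) + 2 * ((cmod (fz g z))\<^sup>2 * Re z powr \<alpha>))"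
    using space_int_fz[OF f] space_int_fz[OF g] by (intro Bochner_Integration.integrable_add integrable_mult_right)
  then have "integrable lborel (\<lambda>z. (cmod (fz f z - fz g z))\<^sup>2 * Re z powr \<alpha>)"
  proof (rule Bochner_Integration.integrable_bound)
    show "(\<lambda>z. (cmod (fz f z - fz g z))\<^sup>2 * Re z powr \<alpha>) \<in> borel_measurable lborel" by measurable
    show "AE z in lborel. norm ((cmod (fz f z - fz g z))\<^sup>2 * Re z powr \<alpha>) \<le>
        norm (2 * ((cmod (fz f z))\<^sup>2 * Re z powr \<alpha>) + 2 * ((cmod (fz g z))\<^sup>2 * Re z powr \<alpha>))"
    proof (rule AE_I2)
      fix z
      have "(cmod (fz f z - fz g z))\<^sup>2 \<le> (cmod (fz f z) + cmod (fz g z))\<^sup>2"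
        by (intro power_mono norm_triangle_ineq4) auto
      also have "\<dots> \<le> 2 * (cmod (fz f z))\<^sup>2 + 2 * (cmod (fz g z))\<^sup>2"
        using ab_le[of "fz f z" "fz g z"] by (simp add: power2_sum)
      finally have "(cmod (fz f z - fz g z))\<^sup>2 * Re z powr \<alpha> \<le> (2 * (cmod (fz f z))\<^sup>2 + 2 * (cmod (fz g z))\<^sup>2) * Re z powr \<alpha>"
        by (rule mult_right_mono) auto
      then show "norm ((cmod (fz f z - fz g z))\<^sup>2 * Re z powr \<alpha>) \<le>
        norm (2 * ((cmod (fz f z))\<^sup>2 * Re z powr \<alpha>) + 2 * ((cmod (fz g z))\<^sup>2 * Re z powr \<alpha>))"
        by (simp add: algebra_simps)
    qed
  qed
  then have "set_integrable lborel RHP (\<lambda>z. (cmod (f z - g z))\<^sup>2 * Re z powr \<alpha>)"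
    unfolding set_integrable_def eq .
  moreover have "(\<lambda>z. f z - g z) holomorphic_on RHP" using f g space_holo by (auto intro!: holomorphic_intros)
  ultimately show ?thesis unfolding bergman_space_def by auto
qed

lemma inner_diff_right:
  assumes f: "f \<in> bergman_space \<alpha>" and g: "g \<in> bergman_space \<alpha>" and h: "h \<in> bergman_space \<alpha>"
  shows "bergman_inner \<alpha> f (\<lambda>z. g z - h z) = bergman_inner \<alpha> f g - bergman_inner \<alpha> f h"
proof -
  have "IF \<alpha> f (\<lambda>z. g z - h z) = (\<lambda>z. IF \<alpha> f g z - IF \<alpha> f h z)"
    by (auto simp: fun_eq_iff IF_def algebra_simps)
  then have "integral\<^sup>L lborel (IF \<alpha> f (\<lambda>z. g z - h z)) = integral\<^sup>L lborel (IF \<alpha> f g) - integral\<^sup>L lborel (IF \<alpha> f h)"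
    using inner_int[OF f g] inner_int[OF f h] by simp
  then show ?thesis unfolding inner_IF by (metis right_diff_distrib)
qed

lemma inner_self_zero:
  assumes h: "h \<in> bergman_space \<alpha>" and z: "z \<in> RHP" and zero: "bergman_inner \<alpha> h h = 0"
  shows "h z = 0"
proof (rule ccontr)
  assume nz: "h z \<noteq> 0"
  have hh: "h holomorphic_on RHP" using h space_holo by auto
  define u where "u w = (cmod (fz h w))\<^sup>2 * Re w powr \<alpha>" for w
  have iu: "integrable lborel u" unfolding u_def by (rule space_int_fz[OF h])
  have IFeq: "IF \<alpha> h h = (\<lambda>w. complex_of_real (u w))"
    by (auto simp: fun_eq_iff IF_def u_def fz_def indicator_def complex_norm_square[symmetric])
  have "integral\<^sup>L lborel u = 0"
    using zero unfolding inner_IF IFeq by simp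
  then have AE0: "AE w in lborel. u w = 0"
    using integral_nonneg_eq_0_iff_AE[OF iu] by (simp add: u_def)
  have cu: "continuous_on RHP (\<lambda>w. (cmod (h w))\<^sup>2 * Re w powr \<alpha>)"
    using holomorphic_on_imp_continuous_on[OF hh]
    by (auto intro!: continuous_intros simp: RHP_def)
  have "(cmod (h z))\<^sup>2 * Re z powr \<alpha> > 0" using nz z by (simp add: RHP_def)
  then obtain e where e: "e > 0" "\<And>w. w \<in> RHP \<Longrightarrow> dist w z < e \<Longrightarrow> (cmod (h w))\<^sup>2 * Re w powr \<alpha> > 0"
    using continuous_on_iff[THEN iffD1, OF cu, rule_format, OF z, of "(cmod (h z))\<^sup>2 * Re z powr \<alpha>"]
    by (smt (verit, ccfv_SIG) dist_real_def)
  obtain d where d: "d > 0" "ball z d \<subseteq> RHP" using RHP_open z open_contains_ball by blast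
  define r where "r = min e d"
  have r: "r > 0" using e d by (simp add: r_def)
  have pos: "u w > 0" if "w \<in> ball z r" for w
  proof -
    have "w \<in> RHP" using that d by (auto simp: r_def)
    moreover have "dist w z < e" using that by (auto simp: r_def dist_commute)
    ultimately show ?thesis using e(2) by (simp add: u_def fz_def)
  qed
  from AE0 have "AE w in lborel. w \<notin> ball z r" by eventually_elim (use pos in force)
  then have "emeasure lborel (ball z r) = 0"
    by (subst AE_iff_measurable[of "ball z r" lborel "\<lambda>w. w \<notin> ball z r", symmetric]) auto
  moreover have "measure lborel (ball z r) > 0" using content_ball_pos[OF r] .
  ultimately show False by (simp add: measure_def)
qed

lemma adj_unique:
  assumes S0: "is_adjoint_on \<alpha> T S0" and S1: "is_adjoint_on \<alpha> T S1"
    and Tsp: "\<And>f. f \<in> bergman_space \<alpha> \<Longrightarrow> T f \<in> bergman_space \<alpha>"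
    and g: "g \<in> bergman_space \<alpha>" and z: "z \<in> RHP"
  shows "S0 g z = S1 g z"
proof -
  have s0: "S0 g \<in> bergman_space \<alpha>" and s1: "S1 g \<in> bergman_space \<alpha>"
    using S0 S1 g unfolding is_adjoint_on_def by auto
  let ?d = "\<lambda>w. S0 g w - S1 g w"
  have d: "?d \<in> bergman_space \<alpha>" by (rule space_diff[OF s0 s1])
  have "bergman_inner \<alpha> ?d ?d = bergman_inner \<alpha> ?d (S0 g) - bergman_inner \<alpha> ?d (S1 g)"
    by (rule inner_diff_right[OF d s0 s1])
  also have "\<dots> = 0"
    using S0 S1 g d unfolding is_adjoint_on_def by (metis diff_self)
  finally have "?d z = 0" using inner_self_zero[OF d z] by blast
  then show ?thesis by simp
qed

lemma tail_fin:
  assumes e: "e < -1" and a: "a > 0"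
  shows "(\<integral>\<^sup>+x. indicator {a..} x * ennreal (x powr e) \<partial>lborel) < \<infinity>"
proof -
  have "(\<lambda>x. x powr e) integrable_on {a..}"
    using has_integral_powr_to_inf[OF e a] by blast
  then have "(\<lambda>x. x powr e) absolutely_integrable_on {a..}"
    by (rule nonnegative_absolutely_integrable_1) auto
  then have "integrable lebesgue (\<lambda>x. indicator {a..} x *\<^sub>R (x powr e))"
    by (simp add: set_integrable_def)
  then have "integrable lborel (\<lambda>x. indicator {a..} x *\<^sub>R (x powr e))"
    by (subst integrable_completion[symmetric]) auto
  then have "(\<integral>\<^sup>+x. ennreal (norm (indicator {a..} x *\<^sub>R (x powr e))) \<partial>lborel) < \<infinity>"
    by (simp add: integrable_iff_bounded)
  moreover have "(\<integral>\<^sup>+x. ennreal (norm (indicator {a..} x *\<^sub>R (x powr e))) \<partial>lborel) =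
      (\<integral>\<^sup>+x. indicator {a..} x * ennreal (x powr e) \<partial>lborel)"
    by (intro nn_integral_cong) (auto simp: indicator_def)
  ultimately show ?thesis by simp
qed

lemma inv_sq_fin: "(\<integral>\<^sup>+y. ennreal (inverse (1 + y\<^sup>2)) \<partial>lborel) < \<infinity>"
proof -
  have pw: "ennreal (inverse (1 + y\<^sup>2)) \<le> indicator {-1..1} y + indicator {1..} y * ennreal (y powr (-2))
      + indicator {1..} (-y) * ennreal ((-y) powr (-2))" for y :: real
  proof -
    consider "y \<in> {-1..1}" | "y \<ge> 1" | "y \<le> -1" by force
    then show ?thesis
    proof cases
      case 1
      have "inverse (1 + y\<^sup>2) \<le> 1" by (simp add: inverse_le_1_iff)
      then have "ennreal (inverse (1 + y\<^sup>2)) \<le> ennreal 1" by (rule ennreal_leI)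
      then have "ennreal (inverse (1 + y\<^sup>2)) \<le> indicator {-1..1} y" using 1 by (simp add: indicator_def)
      then show ?thesis by (intro add_increasing2 zero_le)
    next
      case 2
      have "inverse (1 + y\<^sup>2) \<le> y powr (-2)"
        using 2 by (simp add: powr_minus powr_numeral le_imp_inverse_le)
      then have "ennreal (inverse (1 + y\<^sup>2)) \<le> ennreal (y powr (-2))" by (rule ennreal_leI)
      then have "ennreal (inverse (1 + y\<^sup>2)) \<le> indicator {1..} y * ennreal (y powr (-2))" using 2 by simp
      then show ?thesis by (rule add_increasing2[OF zero_le, OF add_increasing[OF zero_le]])
    next
      case 3
      have "inverse (1 + y\<^sup>2) \<le> (-y) powr (-2)"
        using 3 by (simp add: powr_minus powr_numeral le_imp_inverse_le)
      then have "ennreal (inverse (1 + y\<^sup>2)) \<le> ennreal ((-y) powr (-2))" by (rule ennreal_leI)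
      then have "ennreal (inverse (1 + y\<^sup>2)) \<le> indicator {1..} (-y) * ennreal ((-y) powr (-2))" using 3 by simp
      then show ?thesis by (rule add_increasing[OF zero_le])
    qed
  qed
  have m: "(\<lambda>y. indicator {1..} y * ennreal (y powr (-2))) \<in> borel_measurable borel" by measurable
  have refl: "(\<integral>\<^sup>+y. indicator {1..} (-y) * ennreal ((-y) powr (-2)) \<partial>lborel) = (\<integral>\<^sup>+y. indicator {1..} y * ennreal (y powr (-2)) \<partial>lborel)"
    using nn_integral_real_affine[OF m, of "-1" 0] by simp
  have "(\<integral>\<^sup>+y. ennreal (inverse (1 + y\<^sup>2)) \<partial>lborel) \<le>
     (\<integral>\<^sup>+y. indicator {-1..1} y + indicator {1..} y * ennreal (y powr (-2))
      + indicator {1..} (-y) * ennreal ((-y) powr (-2)) \<partial>lborel)"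
    by (intro nn_integral_mono pw)
  also have "\<dots> = emeasure lborel {-1..1::real} + (\<integral>\<^sup>+y. indicator {1..} y * ennreal (y powr (-2)) \<partial>lborel)
      + (\<integral>\<^sup>+y. indicator {1..} (-y) * ennreal ((-y) powr (-2)) \<partial>lborel)"
    by (subst nn_integral_add, measurable, subst nn_integral_add) auto
  also have "\<dots> < \<infinity>" unfolding refl using tail_fin[of "-2" 1] by simp
  finally show ?thesis .
qed

lemma f0_pt:
  fixes x y :: real
  assumes x: "x > 0" and n: "n \<ge> 1"
  shows "(cmod (inverse ((Complex x y + 1) ^ n)))\<^sup>2 \<le> inverse ((x + 1) ^ (2 * n - 2)) * inverse (1 + y\<^sup>2)"
proof -
  define A where "A = (x + 1)\<^sup>2 + y\<^sup>2"
  define X where "X = (x + 1)\<^sup>2"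
  have c: "Complex x y + 1 = Complex (x + 1) y" by (simp add: complex_eq_iff)
  have nA: "(cmod (Complex x y + 1))\<^sup>2 = A" by (simp add: c cmod_power2 A_def)
  have "(cmod (inverse ((Complex x y + 1) ^ n)))\<^sup>2 = inverse (((cmod (Complex x y + 1))\<^sup>2) ^ n)"
    by (simp add: norm_inverse norm_power power_inverse flip: power_mult) (simp add: mult.commute)
  also have "\<dots> = inverse (A ^ n)" by (simp add: nA)
  finally have e1: "(cmod (inverse ((Complex x y + 1) ^ n)))\<^sup>2 = inverse (A ^ n)" .
  have X1: "X \<ge> 1" using x by (simp add: X_def one_le_power)
  have XA: "X \<le> A" by (simp add: X_def A_def)
  have "X ^ (n - 1) * (1 + y\<^sup>2) \<le> A ^ (n - 1) * A"
    by (intro mult_mono power_mono) (use X1 XA in \<open>auto simp: X_def A_def\<close>)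
  also have "A ^ (n - 1) * A = A ^ n" using n by (metis Suc_diff_1 less_le_trans power_Suc2 zero_less_one)
  finally have le: "X ^ (n - 1) * (1 + y\<^sup>2) \<le> A ^ n" .
  have pos: "0 < X ^ (n - 1) * (1 + y\<^sup>2)" using X1 by (intro mult_pos_pos) (auto simp: add_pos_nonneg)
  have "inverse (A ^ n) \<le> inverse (X ^ (n - 1) * (1 + y\<^sup>2))" by (rule le_imp_inverse_le[OF le pos])
  also have "X ^ (n - 1) = (x + 1) ^ (2 * n - 2)"
  proof -
    have "2 * n - 2 = 2 * (n - 1)" by simp
    then show ?thesis by (simp add: X_def power_mult)
  qed
  finally show ?thesis unfolding e1 by (simp add: inverse_mult_distrib)
qed

lemma f0_space:
  assumes al: "\<alpha> > -1" and n: "real n \<ge> \<alpha> + 3"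
  shows "(\<lambda>w. inverse ((w + 1) ^ n)) \<in> bergman_space \<alpha>"
proof -
  let ?f = "\<lambda>w. inverse ((w + 1) ^ n)"
  have n1: "n \<ge> 1" using n al by linarith
  have hol: "?f holomorphic_on RHP"
  proof -
    have "w + 1 \<noteq> 0" if "w \<in> RHP" for w
      using that by (auto simp: RHP_def complex_eq_iff)
    then show ?thesis by (auto intro!: holomorphic_intros)
  qed
  define k where "k = 2 * n - 2"
  have kr: "real k = 2 * real n - 2" using n1 by (simp add: k_def of_nat_diff)
  have ek: "\<alpha> - real k < -1" using kr n al by linarith
  define P where "P = (\<integral>\<^sup>+y. ennreal (inverse (1 + y\<^sup>2)) \<partial>lborel)"
  have Pfin: "P < \<infinity>" unfolding P_def by (rule inv_sq_fin)
  have Lb: "Lf ?f x \<le> ennreal (inverse ((x + 1) ^ k)) * P" if x: "x > 0" for x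
  proof -
    have "Lf ?f x = (\<integral>\<^sup>+y. ennreal ((cmod (?f (Complex x y)))\<^sup>2) \<partial>lborel)" by (rule Lf_pos[OF x])
    also have "\<dots> \<le> (\<integral>\<^sup>+y. ennreal (inverse ((x + 1) ^ k)) * ennreal (inverse (1 + y\<^sup>2)) \<partial>lborel)"
    proof (intro nn_integral_mono)
      fix y
      have "ennreal ((cmod (?f (Complex x y)))\<^sup>2) \<le> ennreal (inverse ((x + 1) ^ k) * inverse (1 + y\<^sup>2))"
        by (rule ennreal_leI) (use f0_pt[OF x n1, of y] in \<open>simp add: k_def\<close>)
      also have "\<dots> = ennreal (inverse ((x + 1) ^ k)) * ennreal (inverse (1 + y\<^sup>2))"
        using x by (intro ennreal_mult) auto
      finally show "ennreal ((cmod (?f (Complex x y)))\<^sup>2) \<le> ennreal (inverse ((x + 1) ^ k)) * ennreal (inverse (1 + y\<^sup>2))" .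
    qed
    also have "\<dots> = ennreal (inverse ((x + 1) ^ k)) * P" unfolding P_def by (rule nn_integral_cmult) auto
    finally show ?thesis .
  qed
  have pw: "ennreal (x powr \<alpha>) * Lf ?f x \<le> P * (indicator {0..1} x * ennreal (x powr \<alpha>) + indicator {1..} x * ennreal (x powr (\<alpha> - real k)))" for x
  proof (cases "x > 0")
    case False
    then show ?thesis by (simp add: Lf_nonpos)
  next
    case True
    have r: "x powr \<alpha> * inverse ((x + 1) ^ k) \<le> indicator {0..1} x * x powr \<alpha> + indicator {1..} x * x powr (\<alpha> - real k)"
    proof (cases "x \<le> 1")
      case True
      have "inverse ((x + 1) ^ k) \<le> 1" using \<open>x > 0\<close> by (simp add: inverse_le_1_iff one_le_power)
      then have "x powr \<alpha> * inverse ((x + 1) ^ k) \<le> x powr \<alpha>" using mult_left_mono[of _ 1 "x powr \<alpha>"] by simp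
      then show ?thesis using True \<open>x > 0\<close> by (intro add_increasing2) (auto simp: indicator_def)
    next
      case False
      have "inverse ((x + 1) ^ k) \<le> inverse (x ^ k)"
        using \<open>x > 0\<close> by (intro le_imp_inverse_le power_mono) auto
      also have "inverse (x ^ k) = x powr (- real k)" using \<open>x > 0\<close> by (simp add: powr_minus powr_realpow)
      finally have "x powr \<alpha> * inverse ((x + 1) ^ k) \<le> x powr \<alpha> * x powr (- real k)" by (rule mult_left_mono) simp
      also have "\<dots> = x powr (\<alpha> - real k)" by (simp add: powr_add[symmetric])
      finally show ?thesis using False by (simp add: indicator_def)
    qed
    have "ennreal (x powr \<alpha>) * Lf ?f x \<le> ennreal (x powr \<alpha>) * (ennreal (inverse ((x + 1) ^ k)) * P)"
      by (rule mult_left_mono[OF Lb[OF True]]) simp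
    also have "\<dots> = P * ennreal (x powr \<alpha> * inverse ((x + 1) ^ k))"
      using True by (simp add: ennreal_mult mult_ac)
    also have "\<dots> \<le> P * ennreal (indicator {0..1} x * x powr \<alpha> + indicator {1..} x * x powr (\<alpha> - real k))"
      by (intro mult_left_mono ennreal_leI r) simp
    also have "\<dots> = P * (indicator {0..1} x * ennreal (x powr \<alpha>) + indicator {1..} x * ennreal (x powr (\<alpha> - real k)))"
      by (simp add: indicator_def)
    finally show ?thesis .
  qed
  have "(\<integral>\<^sup>+x. ennreal (x powr \<alpha>) * Lf ?f x \<partial>lborel) \<le>
      (\<integral>\<^sup>+x. P * (indicator {0..1} x * ennreal (x powr \<alpha>) + indicator {1..} x * ennreal (x powr (\<alpha> - real k))) \<partial>lborel)"
    by (intro nn_integral_mono pw)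
  also have "\<dots> = P * ((\<integral>\<^sup>+x. indicator {0..1} x * ennreal (x powr \<alpha>) \<partial>lborel) + (\<integral>\<^sup>+x. indicator {1..} x * ennreal (x powr (\<alpha> - real k)) \<partial>lborel))"
    by (subst nn_integral_cmult, measurable, subst nn_integral_add) auto
  also have "\<dots> < \<infinity>"
    using Pfin powr_nn_fin[OF al, of 1] tail_fin[OF ek, of 1] by (simp add: ennreal_mult_less_top)
  finally show ?thesis using space_iff[OF hol] by simp
qed

theorem mainTheorem7:
  fixes \<alpha> a :: real and b :: complex
  assumes "\<alpha> > -1" and "a > 0" and "Re b \<ge> 0"
  shows "normal_op_on \<alpha> (comp_op (\<lambda>w. of_real a * w + b)) \<longleftrightarrow> a = 1 \<or> Re b = 0"
proof -
  note al = assms(1) and a = assms(2) and b = assms(3)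
  let ?T = "comp_op (\<lambda>w. of_real a * w + b)" and ?S = "Sop \<alpha> a b"
  have Tsp: "\<And>f. f \<in> bergman_space \<alpha> \<Longrightarrow> ?T f \<in> bergman_space \<alpha>" using T_space[OF _ al a b] .
  have adj: "is_adjoint_on \<alpha> ?T ?S" by (rule S_adjoint[OF al a b])
  have TS: "?T (?S f) z = of_real (a powr (-2-\<alpha>)) * f ((of_real a * z + b + cnj b) / of_real a)" for f z
    by (simp add: comp_op_def Sop_def)
  have ST: "?S (?T f) z = of_real (a powr (-2-\<alpha>)) * f (of_real a * ((z + cnj b) / of_real a) + b)" for f z
    by (simp add: comp_op_def Sop_def)
  show ?thesis
  proof
    assume N: "normal_op_on \<alpha> ?T"
    show "a = 1 \<or> Re b = 0"
    proof (rule ccontr)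
      assume H: "\<not> (a = 1 \<or> Re b = 0)"
      then have a1: "a \<noteq> 1" and rb: "Re b > 0" using b by auto
      from N obtain S0 where adj0: "is_adjoint_on \<alpha> ?T S0"
        and comm: "\<forall>f\<in>bergman_space \<alpha>. \<forall>z\<in>RHP. ?T (S0 f) z = S0 (?T f) z"
        unfolding normal_op_on_def by blast
      define n where "n = nat \<lceil>\<alpha>\<rceil> + 3"
      have n\<alpha>: "real n \<ge> \<alpha> + 3" unfolding n_def using real_nat_ceiling_ge[of \<alpha>] by simp
      define f0 where "f0 = (\<lambda>w::complex. inverse ((w + 1) ^ n))"
      have f0: "f0 \<in> bergman_space \<alpha>" unfolding f0_def by (rule f0_space[OF al n\<alpha>])
      have z1: "(1::complex) \<in> RHP" by (simp add: RHP_def)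
      have phi1: "of_real a * 1 + b \<in> RHP" using a b by (simp add: RHP_def)
      have "?T (S0 f0) 1 = S0 (?T f0) 1" using comm f0 z1 by blast
      moreover have "?T (S0 f0) 1 = ?T (?S f0) 1"
        using adj_unique[OF adj0 adj Tsp f0 phi1] by (simp add: comp_op_def)
      moreover have "S0 (?T f0) 1 = ?S (?T f0) 1" by (rule adj_unique[OF adj0 adj Tsp Tsp[OF f0] z1])
      ultimately have eq: "?T (?S f0) 1 = ?S (?T f0) 1" by simp
      have arg1: "(of_real a * 1 + b + cnj b) / of_real a = of_real (1 + 2 * Re b / a)"
        using a by (simp add: complex_eq_iff field_simps)
      have arg2: "of_real a * ((1 + cnj b) / of_real a) + b = of_real (1 + 2 * Re b)"
        using a by (simp add: complex_eq_iff field_simps)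
      have k0: "complex_of_real (a powr (-2-\<alpha>)) \<noteq> 0" using a by simp
      have fr: "f0 (of_real t) = of_real (inverse ((t + 1) ^ n))" for t
        by (simp add: f0_def)
      from eq have "f0 (of_real (1 + 2 * Re b / a)) = f0 (of_real (1 + 2 * Re b))"
        unfolding TS ST arg1 arg2 using k0 by simp
      then have "inverse ((1 + 2 * Re b / a + 1) ^ n) = inverse ((1 + 2 * Re b + 1) ^ n)"
        unfolding fr by (simp only: of_real_eq_iff)
      then have "(1 + 2 * Re b / a + 1) ^ n = (1 + 2 * Re b + 1) ^ n" by simp
      then have "1 + 2 * Re b / a + 1 = 1 + 2 * Re b + 1"
        by (rule power_eq_imp_eq_base) (use a rb n_def in \<open>auto intro: add_nonneg_nonneg\<close>)
      then have "Re b / a = Re b" by simp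
      then have "Re b = Re b * a" using a by (simp add: field_simps)
      then show False using a1 rb by simp
    qed
  next
    assume ab: "a = 1 \<or> Re b = 0"
    have comm: "?T (?S f) z = ?S (?T f) z" for f z
    proof -
      have "(of_real a * z + b + cnj b) / of_real a = of_real a * ((z + cnj b) / of_real a) + b"
        using ab a by (auto simp: complex_eq_iff field_simps)
      then show ?thesis unfolding TS ST by simp
    qed
    show "normal_op_on \<alpha> ?T" unfolding normal_op_on_def using Tsp adj comm by blast
  qed
qed

end
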